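(* Let $n\ge2$ and let $S_1,\dots,S_n$ be isometries on an infinite-dimensional Hilbert space $H$ with $\sum_{i=1}^n S_iS_i^*=1_H$; let $O_n\subseteq B(H)$ be the C$^*$-algebra they generate. Let $\Phi_n(x)=\sum_{i=1}^n S_ixS_i^*$ and $\Psi_n(x)=\frac1n\sum_{i=1}^n S_i^*xS_i$ ($x\in O_n$); $\Psi_n$ is the adjoint of $\Phi_n$ with respect to the state $\phi_n$. Then: (i) $\Phi_n$ is not irreducible, i.e. $\Phi_n(O_n)'$ is not equal to the scalar operators $\mathbb{C}1_H$. (ii) $\Phi_n$ is an operational extreme point, but not a numerical operational extreme point, of the set of completely positive maps $O_n\to O_n$. (iii) $\Psi_n$ is not an operational extreme point of the set of completely positive maps $O_n\to O_n$; moreover, $\Psi_n$ is not a Jordan homomorphism.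
   Context: Commutants are taken in $B(H)$. $\mathrm{Ad}\, v(x)=vxv^*$. For the set $S$ of completely positive maps $O_n\to O_n$: a map $\Phi\in S$ is an operational extreme point of $S$ if whenever $\Phi=\sum_{i=1}^m\mathrm{Ad}\,a_i\circ\Psi_i$ with $\Psi_i\in S$ and nonzero $a_1,\dots,a_m\in O_n$ with $\sum_i a_ia_i^*=1$, there exist $z_i\in\Phi(O_n)'$ with $\mathrm{Ad}\,a_i\circ\Psi_i=z_i\Phi$ for all $i$; it is a numerical operational extreme point if in every such decomposition the $z_i$ can be taken to be nonnegative real scalars. A self-adjoint linear map $\Phi$ is a Jordan homomorphism if $\Phi(a^2)=\Phi(a)^2$ for all self-adjoint $a$. $\phi_n$ is the unique state on $O_n$ with $\phi_n(ab)=\phi_n(ba)$ for $a\in O_n$ and $b$ in the closed span of $\{S_\mu S_\nu^*: |\mu|=|\nu|\}$. *)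

theory Defs
  imports "HOL-Analysis.Analysis"
begin

text \<open>A complex inner product space (inner product linear in the second argument),
complete with respect to the induced norm.\<close>
class chilbert = ab_group_add +
  fixes hscale :: "complex \<Rightarrow> 'a \<Rightarrow> 'a"
    and hinner :: "'a \<Rightarrow> 'a \<Rightarrow> complex"
  assumes hscale_add_right: "hscale c (x + y) = hscale c x + hscale c y"
      and hscale_add_left: "hscale (a + b) x = hscale a x + hscale b x"
      and hscale_assoc: "hscale a (hscale b x) = hscale (a * b) x"
      and hscale_one: "hscale 1 x = x"
      and hinner_conj: "hinner x y = cnj (hinner y x)"
      and hinner_add_right: "hinner x (y + z) = hinner x y + hinner x z"
      and hinner_scale_right: "hinner x (hscale c y) = c * hinner x y"
      and hinner_nonneg: "0 \<le> Re (hinner x x)"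
      and hinner_eq_zero: "hinner x x = 0 \<Longrightarrow> x = 0"
      and hcomplete: "(\<forall>e::real>0. \<exists>N::nat. \<forall>m\<ge>N. \<forall>k\<ge>N. sqrt (Re (hinner (X m - X k) (X m - X k))) < e)
          \<Longrightarrow> \<exists>L. \<forall>e::real>0. \<exists>N::nat. \<forall>k\<ge>N. sqrt (Re (hinner (X k - L) (X k - L))) < e"

definition hnorm :: "'a::chilbert \<Rightarrow> real" where
  "hnorm x = sqrt (Re (hinner x x))"

definition infinite_dim :: "'a::chilbert itself \<Rightarrow> bool" where
  "infinite_dim _ \<longleftrightarrow> (\<forall>F::'a set. finite F \<longrightarrow> (\<exists>x. \<forall>c. x \<noteq> (\<Sum>f\<in>F. hscale (c f) f)))"

definition bop :: "('a::chilbert \<Rightarrow> 'a) \<Rightarrow> bool" where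
  "bop T \<longleftrightarrow> (\<forall>x y. T (x + y) = T x + T y) \<and> (\<forall>c x. T (hscale c x) = hscale c (T x))
     \<and> (\<exists>K. \<forall>x. hnorm (T x) \<le> K * hnorm x)"

definition BH :: "('a::chilbert \<Rightarrow> 'a) set" where
  "BH = {T. bop T}"

definition adj :: "('a::chilbert \<Rightarrow> 'a) \<Rightarrow> ('a \<Rightarrow> 'a)" where
  "adj T = (THE S. \<forall>x y. hinner (T x) y = hinner x (S y))"

definition opnorm :: "('a::chilbert \<Rightarrow> 'a) \<Rightarrow> real" where
  "opnorm T = (SUP x\<in>{x. hnorm x \<le> 1}. hnorm (T x))"

definition opadd :: "('a::chilbert \<Rightarrow> 'a) \<Rightarrow> ('a \<Rightarrow> 'a) \<Rightarrow> ('a \<Rightarrow> 'a)" where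
  "opadd T U = (\<lambda>x. T x + U x)"

definition opscale :: "complex \<Rightarrow> ('a::chilbert \<Rightarrow> 'a) \<Rightarrow> ('a \<Rightarrow> 'a)" where
  "opscale c T = (\<lambda>x. hscale c (T x))"

definition isometry :: "('a::chilbert \<Rightarrow> 'a) \<Rightarrow> bool" where
  "isometry S \<longleftrightarrow> bop S \<and> adj S \<circ> S = id"

definition cstar_gen :: "('a::chilbert \<Rightarrow> 'a) set \<Rightarrow> ('a \<Rightarrow> 'a) set" where
  "cstar_gen G = \<Inter> {A. G \<subseteq> A \<and> A \<subseteq> BH
      \<and> (\<forall>T\<in>A. \<forall>U\<in>A. opadd T U \<in> A \<and> T \<circ> U \<in> A)
      \<and> (\<forall>c. \<forall>T\<in>A. opscale c T \<in> A)
      \<and> (\<forall>T\<in>A. adj T \<in> A)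
      \<and> (\<forall>X T. (\<forall>k. X k \<in> A) \<and> T \<in> BH \<and> (\<lambda>k. opnorm (\<lambda>x. X k x - T x)) \<longlonglongrightarrow> 0 \<longrightarrow> T \<in> A)}"

definition commutant :: "('a::chilbert \<Rightarrow> 'a) set \<Rightarrow> ('a \<Rightarrow> 'a) set" where
  "commutant M = {T\<in>BH. \<forall>y\<in>M. T \<circ> y = y \<circ> T}"

definition scalar_ops :: "('a::chilbert \<Rightarrow> 'a) set" where
  "scalar_ops = {opscale c id | c. True}"

definition matpos :: "nat \<Rightarrow> (nat \<Rightarrow> nat \<Rightarrow> ('a::chilbert \<Rightarrow> 'a)) \<Rightarrow> bool" where
  "matpos k X \<longleftrightarrow> (\<forall>h::nat \<Rightarrow> 'a. let z = (\<Sum>i<k. \<Sum>j<k. hinner (h i) (X i j (h j)))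
      in Im z = 0 \<and> 0 \<le> Re z)"

definition linear_on :: "('a::chilbert \<Rightarrow> 'a) set \<Rightarrow> (('a \<Rightarrow> 'a) \<Rightarrow> ('a \<Rightarrow> 'a)) \<Rightarrow> bool" where
  "linear_on A \<Phi> \<longleftrightarrow> (\<forall>x\<in>A. \<forall>y\<in>A. \<Phi> (opadd x y) = opadd (\<Phi> x) (\<Phi> y))
     \<and> (\<forall>c. \<forall>x\<in>A. \<Phi> (opscale c x) = opscale c (\<Phi> x))"

text \<open>The set of completely positive maps A \<rightarrow> A (maps only matter on A).\<close>
definition CP :: "('a::chilbert \<Rightarrow> 'a) set \<Rightarrow> (('a \<Rightarrow> 'a) \<Rightarrow> ('a \<Rightarrow> 'a)) \<Rightarrow> bool" where
  "CP A \<Phi> \<longleftrightarrow> linear_on A \<Phi> \<and> \<Phi> ` A \<subseteq> A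
     \<and> (\<forall>k X. (\<forall>i j. X i j \<in> A) \<and> matpos k X \<longrightarrow> matpos k (\<lambda>i j. \<Phi> (X i j)))"

definition Ad :: "('a::chilbert \<Rightarrow> 'a) \<Rightarrow> ('a \<Rightarrow> 'a) \<Rightarrow> ('a \<Rightarrow> 'a)" where
  "Ad a x = a \<circ> x \<circ> adj a"

definition admissible_decomp ::
  "('a::chilbert \<Rightarrow> 'a) set \<Rightarrow> (('a \<Rightarrow> 'a) \<Rightarrow> ('a \<Rightarrow> 'a)) \<Rightarrow> nat
     \<Rightarrow> (nat \<Rightarrow> ('a \<Rightarrow> 'a)) \<Rightarrow> (nat \<Rightarrow> (('a \<Rightarrow> 'a) \<Rightarrow> ('a \<Rightarrow> 'a))) \<Rightarrow> bool" where
  "admissible_decomp A \<Phi> m a \<Psi> \<longleftrightarrow>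
     (\<forall>i<m. CP A (\<Psi> i) \<and> a i \<in> A \<and> a i \<noteq> (\<lambda>_. 0))
     \<and> (\<forall>h. (\<Sum>i<m. a i (adj (a i) h)) = h)
     \<and> (\<forall>x\<in>A. \<forall>h. \<Phi> x h = (\<Sum>i<m. Ad (a i) (\<Psi> i x) h))"

definition operational_extreme :: "('a::chilbert \<Rightarrow> 'a) set \<Rightarrow> (('a \<Rightarrow> 'a) \<Rightarrow> ('a \<Rightarrow> 'a)) \<Rightarrow> bool" where
  "operational_extreme A \<Phi> \<longleftrightarrow> CP A \<Phi> \<and>
     (\<forall>m a \<Psi>. admissible_decomp A \<Phi> m a \<Psi> \<longrightarrow>
        (\<exists>z. \<forall>i<m. z i \<in> commutant (\<Phi> ` A) \<and> (\<forall>x\<in>A. Ad (a i) (\<Psi> i x) = z i \<circ> \<Phi> x)))"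

definition numerical_operational_extreme :: "('a::chilbert \<Rightarrow> 'a) set \<Rightarrow> (('a \<Rightarrow> 'a) \<Rightarrow> ('a \<Rightarrow> 'a)) \<Rightarrow> bool" where
  "numerical_operational_extreme A \<Phi> \<longleftrightarrow> CP A \<Phi> \<and>
     (\<forall>m a \<Psi>. admissible_decomp A \<Phi> m a \<Psi> \<longrightarrow>
        (\<exists>t::nat \<Rightarrow> real. \<forall>i<m. 0 \<le> t i \<and>
            (\<forall>x\<in>A. Ad (a i) (\<Psi> i x) = opscale (complex_of_real (t i)) (\<Phi> x))))"

definition jordan_hom_on :: "('a::chilbert \<Rightarrow> 'a) set \<Rightarrow> (('a \<Rightarrow> 'a) \<Rightarrow> ('a \<Rightarrow> 'a)) \<Rightarrow> bool" where
  "jordan_hom_on A \<Phi> \<longleftrightarrow> linear_on A \<Phi> \<and> (\<forall>x\<in>A. \<Phi> (adj x) = adj (\<Phi> x))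
     \<and> (\<forall>a\<in>A. adj a = a \<longrightarrow> \<Phi> (a \<circ> a) = \<Phi> a \<circ> \<Phi> a)"

end

theory Submission
  imports Defs
begin

definition NN :: "'a::chilbert \<Rightarrow> real" where "NN x = Re (hinner x x)"

lemma mcnj1: "z * cnj z = (complex_of_real (cmod z))^2"
  by (metis complex_norm_square of_real_power)
lemma mcnj2: "cnj z * z = (complex_of_real (cmod z))^2"
  by (metis complex_norm_square of_real_power mult.commute)

lemma hscale_zero_left[simp]: "hscale 0 x = (0::'a::chilbert)"
proof -
  have "hscale 0 x = hscale 0 x + hscale (0::complex) (x::'a)"
    using hscale_add_left[of 0 0 x] by simp
  thus ?thesis by simp
qed

lemma hscale_zero_right[simp]: "hscale c (0::'a::chilbert) = 0"
proof -
  have "hscale c (0::'a) = hscale c 0 + hscale c 0"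
    using hscale_add_right[of c 0 0] by simp
  thus ?thesis by simp
qed

lemma hscale_minus_right: "hscale c (- x) = - hscale c (x::'a::chilbert)"
proof -
  have "hscale c (x + - x) = 0" by simp
  hence "hscale c x + hscale c (-x) = 0" by (simp only: hscale_add_right)
  thus ?thesis by (rule minus_unique[symmetric])
qed

lemma hscale_diff_right: "hscale c (x - y) = hscale c x - hscale c (y::'a::chilbert)"
  by (simp only: diff_conv_add_uminus hscale_add_right hscale_minus_right)

lemma hscale_minus_left: "hscale (- c) x = - hscale c (x::'a::chilbert)"
proof -
  have "hscale (c + - c) x = 0" by simp
  hence "hscale c x + hscale (-c) x = 0" by (simp only: hscale_add_left)
  thus ?thesis by (rule minus_unique[symmetric])
qed

lemma hscale_sum_right: "hscale c (\<Sum>i\<in>A. f i) = (\<Sum>i\<in>A. hscale c (f i::'a::chilbert))"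
  by (induction A rule: infinite_finite_induct) (auto simp: hscale_add_right)

lemma hscale_sum_left: "hscale (\<Sum>i\<in>A. f i) x = (\<Sum>i\<in>A. hscale (f i) (x::'a::chilbert))"
  by (induction A rule: infinite_finite_induct) (auto simp: hscale_add_left)

lemma hinner_add_left: "hinner (x + y) z = hinner x z + hinner y (z::'a::chilbert)"
  by (metis complex_cnj_add hinner_add_right hinner_conj)

lemma hinner_scale_left: "hinner (hscale c x) y = cnj c * hinner x (y::'a::chilbert)"
  by (metis complex_cnj_mult hinner_conj hinner_scale_right)

lemma hinner_zero_right[simp]: "hinner x (0::'a::chilbert) = 0"
  using hinner_scale_right[of x 0 0] by simp

lemma hinner_zero_left[simp]: "hinner (0::'a::chilbert) x = 0"
  by (metis complex_cnj_zero hinner_conj hinner_zero_right)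

lemma hinner_minus_right: "hinner x (- y) = - hinner x (y::'a::chilbert)"
  by (metis add.right_inverse add_eq_0_iff2 hinner_add_right hinner_zero_right)

lemma hinner_minus_left: "hinner (- x) y = - hinner x (y::'a::chilbert)"
  by (metis complex_cnj_minus hinner_conj hinner_minus_right)

lemma hinner_diff_right: "hinner x (y - z) = hinner x y - hinner x (z::'a::chilbert)"
  by (simp only: diff_conv_add_uminus hinner_add_right hinner_minus_right)

lemma hinner_diff_left: "hinner (x - y) z = hinner x z - hinner y (z::'a::chilbert)"
  by (simp only: diff_conv_add_uminus hinner_add_left hinner_minus_left)

lemma hinner_sum_right: "hinner x (\<Sum>i\<in>A. f i) = (\<Sum>i\<in>A. hinner x (f i::'a::chilbert))"
  by (induction A rule: infinite_finite_induct) (auto simp: hinner_add_right)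

lemma hinner_sum_left: "hinner (\<Sum>i\<in>A. f i) x = (\<Sum>i\<in>A. hinner (f i) (x::'a::chilbert))"
  by (induction A rule: infinite_finite_induct) (auto simp: hinner_add_left)

lemma hinner_self_real: "hinner x x = complex_of_real (NN (x::'a::chilbert))"
proof -
  have "hinner x x = cnj (hinner x x)" using hinner_conj by metis
  hence "Im (hinner x x) = 0" by (metis Reals_cnj_iff complex_is_Real_iff)
  thus ?thesis unfolding NN_def by (simp add: complex_eq_iff)
qed

lemma NN_nonneg: "0 \<le> NN (x::'a::chilbert)"
  unfolding NN_def by (rule hinner_nonneg)

lemma NN_eq_0: "NN (x::'a::chilbert) = 0 \<longleftrightarrow> x = 0"
  using hinner_self_real hinner_eq_zero by (metis hinner_zero_left of_real_0 NN_def zero_complex.simps(1))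

lemma hinner_ext: "(\<And>x. hinner x y = hinner x z) \<Longrightarrow> y = (z::'a::chilbert)"
proof -
  assume "\<And>x. hinner x y = hinner x z"
  hence "hinner (y - z) (y - z) = 0" by (simp add: hinner_diff_right)
  hence "y - z = 0" using hinner_eq_zero by blast
  thus ?thesis by simp
qed

lemma NN_expand: "NN (x + hscale t y) = NN x + 2 * Re (t * hinner x y) + (cmod t)^2 * NN (y::'a::chilbert)"
proof -
  have e1: "hinner (x + hscale t y) (x + hscale t y) =
     hinner x x + t * hinner x y + cnj t * hinner y x + (cnj t * t) * hinner y y"
    by (simp add: hinner_add_left hinner_add_right hinner_scale_left hinner_scale_right algebra_simps)
  have e2: "cnj t * hinner y x = cnj (t * hinner x y)" using hinner_conj[of y x] by simp
  have e3: "cnj t * t = complex_of_real ((cmod t)^2)"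
    by (simp only: mcnj2 of_real_power)
  have "NN (x + hscale t y) = Re (hinner x x + t * hinner x y + cnj (t * hinner x y) + complex_of_real ((cmod t)^2) * hinner y y)"
    unfolding NN_def e1 e2 e3 ..
  also have "\<dots> = Re (hinner x x) + Re (t * hinner x y) + Re (cnj (t * hinner x y)) + Re (complex_of_real ((cmod t)^2) * hinner y y)"
    by (simp only: plus_complex.sel)
  also have "Re (cnj (t * hinner x y)) = Re (t * hinner x y)" by simp
  also have "Re (complex_of_real ((cmod t)^2) * hinner y y) = (cmod t)^2 * Re (hinner y y)"
    by simp
  finally show ?thesis unfolding NN_def by simp
qed

lemma cauchy_schwarz: "(cmod (hinner x y))^2 \<le> NN x * NN (y::'a::chilbert)"
proof (cases "y = 0")
  case True thus ?thesis by (simp add: NN_def)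
next
  case False
  hence ny: "NN y > 0" using NN_nonneg NN_eq_0 by (metis order_le_less)
  define b where "b = hinner x y"
  define t where "t = - cnj b / complex_of_real (NN y)"
  have "0 \<le> NN (x + hscale t y)" by (rule NN_nonneg)
  also have "\<dots> = NN x + 2 * Re (t * b) + (cmod t)^2 * NN y"
    unfolding b_def by (rule NN_expand)
  also have "t * b = - complex_of_real ((cmod b)^2 / NN y)"
    unfolding t_def by (simp add: mcnj1 mult.commute)
  also have "(cmod t)^2 = (cmod b)^2 / (NN y)^2"
    unfolding t_def using ny by (simp add: norm_divide power_divide)
  finally have "0 \<le> NN x - 2 * ((cmod b)^2 / NN y) + (cmod b)^2 / (NN y)^2 * NN y" by simp
  hence "0 \<le> NN x - (cmod b)^2 / NN y" using ny by (simp add: power2_eq_square)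
  hence "(cmod b)^2 / NN y \<le> NN x" by simp
  thus ?thesis using ny unfolding b_def by (simp add: pos_divide_le_eq)
qed

lemma cauchy_schwarz2: "cmod (hinner x y) \<le> hnorm x * hnorm (y::'a::chilbert)"
proof -
  have "cmod (hinner x y) \<le> sqrt (NN x * NN y)"
    using cauchy_schwarz by (metis norm_ge_zero real_le_rsqrt)
  thus ?thesis unfolding hnorm_def NN_def by (simp add: real_sqrt_mult)
qed

lemma hnorm_NN: "hnorm x = sqrt (NN (x::'a::chilbert))"
  unfolding hnorm_def NN_def by simp

lemma hnorm_nonneg: "0 \<le> hnorm (x::'a::chilbert)"
  unfolding hnorm_def by (simp add: hinner_nonneg)

lemma hnorm_sq: "(hnorm x)^2 = NN (x::'a::chilbert)"
  by (simp only: hnorm_NN real_sqrt_pow2[OF NN_nonneg])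

lemma hnorm_triangle: "hnorm (x + y) \<le> hnorm x + hnorm (y::'a::chilbert)"
proof -
  have e: "NN (x + y) = NN x + 2 * Re (hinner x y) + NN y"
    using NN_expand[of x 1 y] by (simp add: hscale_one)
  have r: "Re (hinner x y) \<le> hnorm x * hnorm y"
    using order_trans[OF complex_Re_le_cmod cauchy_schwarz2] by blast
  have "(hnorm (x+y))^2 = NN x + 2 * Re (hinner x y) + NN y" using e hnorm_sq by metis
  also have "\<dots> \<le> (hnorm x)^2 + 2 * (hnorm x * hnorm y) + (hnorm y)^2"
    using r hnorm_sq by (metis add_mono_thms_linordered_semiring(2) add_right_mono mult_left_mono zero_le_numeral)
  also have "\<dots> = (hnorm x + hnorm y)^2" by (simp add: power2_sum)
  finally have "(hnorm (x+y))^2 \<le> (hnorm x + hnorm y)^2" .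
  thus ?thesis using hnorm_nonneg by (meson power2_le_imp_le add_nonneg_nonneg)
qed

lemma hnorm_scale: "hnorm (hscale c x) = cmod c * hnorm (x::'a::chilbert)"
proof -
  have "hinner (hscale c x) (hscale c x) = (cnj c * c) * hinner x x"
    by (simp add: hinner_scale_left hinner_scale_right)
  also have "cnj c * c = complex_of_real ((cmod c)^2)"
    by (simp add: mcnj2)
  finally have "NN (hscale c x) = (cmod c)^2 * NN x"
    unfolding NN_def by simp
  thus ?thesis by (simp add: hnorm_NN real_sqrt_mult)
qed

lemma hnorm_minus: "hnorm (- x) = hnorm (x::'a::chilbert)"
  unfolding hnorm_def by (simp add: hinner_minus_left hinner_minus_right)

lemma hnorm_diff_commute: "hnorm (x - y) = hnorm (y - (x::'a::chilbert))"
  by (metis hnorm_minus minus_diff_eq)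

lemma NN_scale: "NN (hscale c x) = (cmod c)^2 * NN (x::'a::chilbert)"
  by (metis hnorm_scale hnorm_sq power_mult_distrib)

lemma NN_minus: "NN (- x) = NN (x::'a::chilbert)"
  by (metis hnorm_minus hnorm_sq)

lemma parallelogram: "NN (x + y) + NN (x - y) = 2 * NN x + 2 * NN (y::'a::chilbert)"
proof -
  have a: "NN (x + y) = NN x + 2 * Re (hinner x y) + NN y"
    using NN_expand[of x 1 y] by (simp add: hscale_one)
  have "NN (x + hscale (-1) y) = NN x + 2 * Re (- hinner x y) + NN y"
    using NN_expand[of x "-1" y] by simp
  moreover have "hscale (-1) y = - y" by (simp add: hscale_minus_left hscale_one)
  ultimately have b: "NN (x - y) = NN x - 2 * Re (hinner x y) + NN y" by simp
  show ?thesis using a b by simp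
qed

lemma small_t:
  fixes b :: complex and c :: real
  assumes "\<And>t. 0 \<le> 2 * Re (t * b) + (cmod t)^2 * c"
  shows "b = 0"
proof (rule ccontr)
  assume nz: "b \<noteq> 0"
  define e :: real where "e = 1 / (\<bar>c\<bar> + 1)"
  have e0: "e > 0" unfolding e_def by simp
  have ec: "e * c < 1"
  proof -
    have "e * c \<le> e * \<bar>c\<bar>" using e0 by (simp add: mult_left_mono)
    also have "\<dots> < 1" unfolding e_def by (simp add: field_simps)
    finally show ?thesis .
  qed
  define t where "t = - complex_of_real e * cnj b"
  have "t * b = - complex_of_real (e * (cmod b)^2)"
    unfolding t_def by (simp add: mcnj1 mult.commute mult.left_commute)
  hence r: "Re (t * b) = - e * (cmod b)^2" by simp
  have ct: "(cmod t)^2 = e^2 * (cmod b)^2"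
    unfolding t_def using e0 by (simp add: norm_mult power_mult_distrib)
  have "0 \<le> - 2 * e * (cmod b)^2 + e^2 * (cmod b)^2 * c"
    using assms[of t] r ct by simp
  hence "0 \<le> e * (cmod b)^2 * (e * c - 2)" by (simp add: algebra_simps power2_eq_square)
  moreover have "e * (cmod b)^2 > 0" using e0 nz by simp
  ultimately have "e * c - 2 \<ge> 0" by (simp add: zero_le_mult_iff)
  thus False using ec by simp
qed

lemma riesz:
  fixes f :: "'a::chilbert \<Rightarrow> complex"
  assumes add: "\<And>x y. f (x + y) = f x + f y" and sc: "\<And>c x. f (hscale c x) = c * f x"
    and bd: "\<And>x. cmod (f x) \<le> K * hnorm x"
  shows "\<exists>w. \<forall>x. f x = hinner w x"
proof (cases "\<forall>x. f x = 0")
  case True thus ?thesis by (intro exI[of _ 0]) simp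
next
  case False
  have f0: "f 0 = 0" using sc[of 0 0] by simp
  have fdiff: "f (x - y) = f x - f y" for x y using add[of "x - y" y] by simp
  obtain x0 where x0: "f x0 \<noteq> 0" using False by blast
  define M where "M = {x. f x = 1}"
  have x1: "hscale (1 / f x0) x0 \<in> M" unfolding M_def using x0 by (simp add: sc)
  define d where "d = Inf (NN ` M)"
  have bdd: "bdd_below (NN ` M)" by (rule bdd_belowI[of _ 0]) (auto simp: NN_nonneg)
  have dle: "d \<le> NN x" if "x \<in> M" for x
    unfolding d_def using bdd that by (simp add: cInf_lower)
  have d0: "0 \<le> d" unfolding d_def using x1 by (intro cInf_greatest) (auto simp: NN_nonneg)
  have "\<forall>k::nat. \<exists>x. x \<in> M \<and> NN x < d + 1 / (real k + 1)"
  proof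
    fix k :: nat
    have lt: "Inf (NN ` M) < d + 1 / (real k + 1)" unfolding d_def by (simp add: add_pos_pos)
    have ne: "NN ` M \<noteq> {}" using x1 by blast
    obtain v where "v \<in> NN ` M" "v < d + 1 / (real k + 1)"
      using cInf_lessD[OF ne lt] by blast
    thus "\<exists>x. x \<in> M \<and> NN x < d + 1 / (real k + 1)" by blast
  qed
  from choice[OF this] obtain X where XX: "\<forall>k. X k \<in> M \<and> NN (X k) < d + 1 / (real k + 1)"
    by blast
  hence X: "\<And>k. X k \<in> M" "\<And>k. NN (X k) < d + 1 / (real k + 1)" by auto
  have XM: "f (X k) = 1" for k using X(1) unfolding M_def by simp
  have cd: "NN (X k - X l) \<le> 2 / (real k + 1) + 2 / (real l + 1)" for k l
  proof -
    have "hscale (1/2) (X k + X l) \<in> M" unfolding M_def by (simp add: sc add XM)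
    hence "d \<le> NN (hscale (1/2) (X k + X l))" by (rule dle)
    also have "\<dots> = (cmod (1/2::complex))^2 * NN (X k + X l)" by (simp only: NN_scale)
    also have "(cmod (1/2::complex))^2 = 1/4" by (simp add: power2_eq_square norm_divide)
    also have "1/4 * NN (X k + X l) = NN (X k + X l) / 4" by simp
    finally have "4 * d \<le> NN (X k + X l)" by simp
    moreover note parallelogram[of "X k" "X l"] X(2)[of k] X(2)[of l]
    ultimately show ?thesis by simp
  qed
  have "\<exists>L. \<forall>e::real>0. \<exists>N::nat. \<forall>k\<ge>N. sqrt (Re (hinner (X k - L) (X k - L))) < e"
  proof (rule hcomplete, intro allI impI)
    fix e :: real assume e: "e > 0"
    obtain N :: nat where N: "4 / e^2 < real N" using reals_Archimedean2 by blast
    have "\<forall>m\<ge>N. \<forall>k\<ge>N. sqrt (Re (hinner (X m - X k) (X m - X k))) < e"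
    proof (intro allI impI)
      fix m k assume mk: "m \<ge> N" "k \<ge> N"
      have "2 / (real m + 1) \<le> 2 / (real N + 1)" using mk by (simp add: frac_le)
      moreover have "2 / (real k + 1) \<le> 2 / (real N + 1)" using mk by (simp add: frac_le)
      ultimately have "NN (X m - X k) \<le> 4 / (real N + 1)" using cd[of m k] by simp
      also have "\<dots> < e^2"
      proof -
        have "4 < e^2 * real N" using N e by (simp add: field_simps)
        moreover have "e^2 * real N \<le> e^2 * (real N + 1)" by (simp add: mult_left_mono)
        ultimately have "4 < e^2 * (real N + 1)" by linarith
        thus ?thesis by (simp add: field_simps)
      qed
      finally have "sqrt (NN (X m - X k)) < sqrt (e^2)" by (rule real_sqrt_less_mono)
      hence "sqrt (NN (X m - X k)) < e" using e by simp
      thus "sqrt (Re (hinner (X m - X k) (X m - X k))) < e" unfolding NN_def .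
    qed
    thus "\<exists>N. \<forall>m\<ge>N. \<forall>k\<ge>N. sqrt (Re (hinner (X m - X k) (X m - X k))) < e" by blast
  qed
  then obtain L where L: "\<And>e. e > 0 \<Longrightarrow> \<exists>N::nat. \<forall>k\<ge>N. hnorm (X k - L) < e"
    unfolding hnorm_def by blast
  have fL: "f L = 1"
  proof (rule ccontr)
    assume ne: "f L \<noteq> 1"
    define del where "del = cmod (1 - f L)"
    have del0: "del > 0" unfolding del_def using ne by simp
    obtain N where N: "\<forall>k\<ge>N. hnorm (X k - L) < del / (\<bar>K\<bar> + 1)"
      using L[of "del / (\<bar>K\<bar> + 1)"] del0 by auto
    have "del = cmod (f (X N - L))" unfolding del_def by (simp add: fdiff XM)
    also have "\<dots> \<le> K * hnorm (X N - L)" by (rule bd)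
    also have "\<dots> \<le> \<bar>K\<bar> * hnorm (X N - L)" by (rule mult_right_mono[OF abs_ge_self hnorm_nonneg])
    also have "\<dots> \<le> \<bar>K\<bar> * (del / (\<bar>K\<bar> + 1))"
      using N less_imp_le by (intro mult_left_mono) auto
    also have "\<dots> < del" using del0 by (simp add: field_simps)
    finally show False by simp
  qed
  have LM: "L \<in> M" unfolding M_def using fL by simp
  have NL: "NN L \<le> d"
  proof (rule ccontr)
    assume "\<not> NN L \<le> d"
    hence gt: "hnorm L > sqrt d" by (simp add: hnorm_NN)
    define g where "g = hnorm L - sqrt d"
    have g0: "g > 0" unfolding g_def using gt by simp
    obtain N1 where N1: "\<forall>k\<ge>N1. hnorm (X k - L) < g / 2" using L[of "g/2"] g0 by auto
    obtain N2 :: nat where N2: "4 / g^2 < real N2" using reals_Archimedean2 by blast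
    define k where "k = max N1 N2"
    have "hnorm (X k - L) < g / 2" using N1 unfolding k_def by simp
    hence a: "hnorm (L - X k) < g / 2" by (simp add: hnorm_diff_commute)
    have "1 / (real k + 1) < (g/2)^2"
    proof -
      have "real N2 \<le> real k" unfolding k_def by simp
      hence "4 / g^2 < real k + 1" using N2 by simp
      hence "4 < g^2 * (real k + 1)" using g0 by (simp add: field_simps)
      thus ?thesis by (simp add: field_simps power2_eq_square)
    qed
    hence "sqrt (1 / (real k + 1)) < sqrt ((g / 2)^2)" by (rule real_sqrt_less_mono)
    hence "sqrt (1 / (real k + 1)) < g / 2" using g0 by simp
    moreover have "hnorm (X k) \<le> sqrt (d + 1 / (real k + 1))"
      unfolding hnorm_NN by (rule real_sqrt_le_mono[OF less_imp_le[OF X(2)[of k]]])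
    moreover have "sqrt (d + 1 / (real k + 1)) \<le> sqrt d + sqrt (1 / (real k + 1))"
      using d0 by (intro sqrt_add_le_add_sqrt) auto
    moreover have "hnorm L \<le> hnorm (X k) + hnorm (L - X k)"
      using hnorm_triangle[of "X k" "L - X k"] by simp
    ultimately have "hnorm L < sqrt d + g" using a by simp
    thus False unfolding g_def by simp
  qed
  have NLd: "NN L = d" using NL dle[OF LM] by simp
  have orth: "hinner L y = 0" if y: "f y = 0" for y
  proof (rule small_t)
    fix t
    have "L + hscale t y \<in> M" unfolding M_def using fL y by (simp add: add sc)
    hence "NN L \<le> NN (L + hscale t y)" using dle NLd by simp
    thus "0 \<le> 2 * Re (t * hinner L y) + (cmod t)^2 * NN y" by (simp add: NN_expand)
  qed
  have Lnz: "L \<noteq> 0" using fL f0 by auto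
  have "NN L \<noteq> 0" using NN_eq_0 Lnz by blast
  hence NLp: "NN L > 0" using NN_nonneg[of L] by linarith
  show ?thesis
  proof (intro exI allI)
    fix x
    have "f (x - hscale (f x) L) = 0" by (simp add: fdiff sc fL)
    hence "hinner L (x - hscale (f x) L) = 0" by (rule orth)
    hence "hinner L x = f x * hinner L L" by (simp add: hinner_diff_right hinner_scale_right)
    hence hx: "hinner L x = f x * complex_of_real (NN L)" by (simp add: hinner_self_real)
    have "hinner (hscale (complex_of_real (1 / NN L)) L) x = complex_of_real (1 / NN L) * hinner L x"
      by (simp only: hinner_scale_left complex_cnj_complex_of_real)
    also have "\<dots> = f x * complex_of_real (1 / NN L * NN L)" unfolding hx of_real_mult by (simp only: mult_ac)
    also have "1 / NN L * NN L = 1" using NLp by simp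
    finally show "f x = hinner (hscale (complex_of_real (1 / NN L)) L) x" by simp
  qed
qed



lemma bop_add: "bop T \<Longrightarrow> T (x + y) = T x + T y" by (simp add: bop_def)
lemma bop_scale: "bop T \<Longrightarrow> T (hscale c x) = hscale c (T x)" by (simp add: bop_def)
lemma bop_zero: "bop T \<Longrightarrow> T 0 = (0::'a::chilbert)"
  using bop_scale[of T 0 0] by simp
lemma bop_minus: "bop T \<Longrightarrow> T (- x) = - T (x::'a::chilbert)"
proof -
  assume b: "bop T"
  have "T x + T (- x) = 0" using bop_add[OF b, of x "-x"] bop_zero[OF b] by simp
  thus ?thesis by (rule minus_unique[symmetric])
qed
lemma bop_diff: "bop T \<Longrightarrow> T (x - y) = T x - T (y::'a::chilbert)"
  by (simp only: diff_conv_add_uminus bop_add bop_minus)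
lemma bop_sum: "bop T \<Longrightarrow> T (\<Sum>i\<in>A. f i) = (\<Sum>i\<in>A. T (f i::'a::chilbert))"
  by (induction A rule: infinite_finite_induct) (auto simp: bop_add bop_zero)

lemma bop_bound:
  fixes T :: "'a::chilbert \<Rightarrow> 'a"
  assumes "bop T"
  shows "\<exists>K::real. K \<ge> 0 \<and> (\<forall>y. hnorm (T y) \<le> K * hnorm y)"
proof -
  obtain K where K: "\<forall>x. hnorm (T x) \<le> K * hnorm x" using assms unfolding bop_def by blast
  have "\<forall>x. hnorm (T x) \<le> max K 0 * hnorm x"
  proof
    fix x :: 'a
    have "K * hnorm x \<le> max K 0 * hnorm x" using hnorm_nonneg by (intro mult_right_mono) auto
    thus "hnorm (T x) \<le> max K 0 * hnorm x" using K by (meson order_trans)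
  qed
  thus ?thesis by (intro exI[of _ "max K 0"]) auto
qed

lemma adj_unique:
  assumes "\<And>x y. hinner (T x) y = hinner x (S y)"
  shows "adj T = (S::'a::chilbert \<Rightarrow> 'a)"
  unfolding adj_def
proof (rule the_equality)
  show "\<forall>x y. hinner (T x) y = hinner x (S y)" using assms by blast
next
  fix S' assume a: "\<forall>x y. hinner (T x) y = hinner x (S' y)"
  show "S' = S"
  proof
    fix y show "S' y = S y" by (rule hinner_ext) (metis a assms)
  qed
qed

lemma adj_exists:
  assumes b: "bop T"
  shows "\<exists>S. \<forall>x y. hinner (T x) y = hinner x (S y :: 'a::chilbert)"
proof -
  obtain K where K0: "K \<ge> 0" and K: "\<And>x. hnorm (T x) \<le> K * hnorm x" using bop_bound[OF b] by blast
  have "\<forall>y. \<exists>w. \<forall>x. hinner y (T x) = hinner w x"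
  proof
    fix y :: 'a
    show "\<exists>w. \<forall>x. hinner y (T x) = hinner w x"
    proof (rule riesz)
      fix x z show "hinner y (T (x + z)) = hinner y (T x) + hinner y (T z)"
        by (simp add: bop_add[OF b] hinner_add_right)
    next
      fix c x show "hinner y (T (hscale c x)) = c * hinner y (T x)"
        by (simp add: bop_scale[OF b] hinner_scale_right)
    next
      fix x
      have "cmod (hinner y (T x)) \<le> hnorm y * hnorm (T x)" by (rule cauchy_schwarz2)
      also have "\<dots> \<le> hnorm y * (K * hnorm x)" using K hnorm_nonneg by (intro mult_left_mono) auto
      finally show "cmod (hinner y (T x)) \<le> (hnorm y * K) * hnorm x" by (simp add: mult.assoc)
    qed
  qed
  from choice[OF this] obtain W where W: "\<forall>y x. hinner y (T x) = hinner (W y) x" by blast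
  have "\<forall>x y. hinner (T x) y = hinner x (W y)"
  proof (intro allI)
    fix x y
    have "hinner (T x) y = cnj (hinner y (T x))" by (rule hinner_conj)
    also have "\<dots> = cnj (hinner (W y) x)" using W by simp
    also have "\<dots> = hinner x (W y)" by (metis hinner_conj)
    finally show "hinner (T x) y = hinner x (W y)" .
  qed
  thus ?thesis by blast
qed

lemma adj_prop: "bop T \<Longrightarrow> hinner (T x) y = hinner x (adj T y :: 'a::chilbert)"
proof -
  assume "bop T"
  then obtain S where S: "\<forall>x y. hinner (T x) y = hinner x (S y :: 'a)" using adj_exists by blast
  hence "adj T = S" by (intro adj_unique) blast
  thus ?thesis using S by simp
qed

lemma adj_prop2: "bop T \<Longrightarrow> hinner (adj T y) x = hinner y (T x :: 'a::chilbert)"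
  by (metis adj_prop hinner_conj)

lemma adj_bop: assumes b: "bop T" shows "bop (adj (T::'a::chilbert \<Rightarrow> 'a))"
proof -
  obtain K where K0: "K \<ge> 0" and K: "\<And>x. hnorm (T x) \<le> K * hnorm x" using bop_bound[OF b] by blast
  have add: "adj T (y + z) = adj T y + adj T z" for y z
    by (rule hinner_ext) (simp add: adj_prop[OF b, symmetric] hinner_add_right)
  have sc: "adj T (hscale c y) = hscale c (adj T y)" for c y
    by (rule hinner_ext) (simp add: adj_prop[OF b, symmetric] hinner_scale_right)
  have bd: "hnorm (adj T y) \<le> K * hnorm y" for y
  proof -
    define v where "v = adj T y"
    have "(hnorm v)^2 = Re (hinner v v)" by (simp add: hnorm_sq NN_def)
    also have "hinner v v = hinner (T v) y" unfolding v_def by (simp add: adj_prop[OF b])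
    also have "Re (hinner (T v) y) \<le> cmod (hinner (T v) y)" by (rule complex_Re_le_cmod)
    also have "\<dots> \<le> hnorm (T v) * hnorm y" by (rule cauchy_schwarz2)
    also have "\<dots> \<le> (K * hnorm v) * hnorm y" using K hnorm_nonneg by (intro mult_right_mono) auto
    finally have *: "(hnorm v)^2 \<le> K * hnorm v * hnorm y" .
    show ?thesis
    proof (cases "hnorm v = 0")
      case True thus ?thesis using mult_nonneg_nonneg[OF K0 hnorm_nonneg[of y]] unfolding v_def by simp
    next
      case False
      hence p: "hnorm v > 0" using hnorm_nonneg by (metis order_le_less)
      have "hnorm v * hnorm v \<le> hnorm v * (K * hnorm y)" using * by (simp add: power2_eq_square mult_ac)
      hence "hnorm v \<le> K * hnorm y" using p by simp
      thus ?thesis unfolding v_def .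
    qed
  qed
  show ?thesis unfolding bop_def using add sc bd by blast
qed

lemma adj_adj: "bop T \<Longrightarrow> adj (adj T) = (T::'a::chilbert \<Rightarrow> 'a)"
  by (intro adj_unique) (simp add: adj_prop2)

lemma bop_comp: "bop T \<Longrightarrow> bop U \<Longrightarrow> bop (T \<circ> (U::'a::chilbert \<Rightarrow> 'a))"
proof -
  assume t: "bop T" and u: "bop U"
  obtain K where K0: "K \<ge> 0" and K: "\<And>x. hnorm (T x) \<le> K * hnorm x" using bop_bound[OF t] by blast
  obtain L where L0: "L \<ge> 0" and L: "\<And>x. hnorm (U x) \<le> L * hnorm x" using bop_bound[OF u] by blast
  have "hnorm (T (U x)) \<le> (K * L) * hnorm x" for x
  proof -
    have "hnorm (T (U x)) \<le> K * hnorm (U x)" by (rule K)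
    also have "\<dots> \<le> K * (L * hnorm x)" using L K0 by (intro mult_left_mono) auto
    finally show ?thesis by (simp add: mult.assoc)
  qed
  thus ?thesis unfolding bop_def using t u by (auto simp: bop_add bop_scale)
qed

lemma bop_id: "bop (id::'a::chilbert \<Rightarrow> 'a)"
  unfolding bop_def by (intro conjI exI[of _ 1]) auto

lemma bop_zero_op: "bop (\<lambda>_. 0::'a::chilbert)"
  unfolding bop_def by (intro conjI exI[of _ 0]) (auto simp: hnorm_def)

lemma bop_plus: "bop T \<Longrightarrow> bop U \<Longrightarrow> bop (\<lambda>h. T h + (U h::'a::chilbert))"
proof -
  assume t: "bop T" and u: "bop U"
  obtain K where K0: "K \<ge> 0" and K: "\<And>x. hnorm (T x) \<le> K * hnorm x" using bop_bound[OF t] by blast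
  obtain L where L0: "L \<ge> 0" and L: "\<And>x. hnorm (U x) \<le> L * hnorm x" using bop_bound[OF u] by blast
  have bd: "\<forall>x. hnorm (T x + U x) \<le> (K + L) * hnorm x"
  proof
    fix x show "hnorm (T x + U x) \<le> (K + L) * hnorm x"
      using hnorm_triangle[of "T x" "U x"] K[of x] L[of x] by (simp add: distrib_right)
  qed
  have a: "\<forall>x y. T (x+y) + U (x+y) = (T x + U x) + (T y + U y)" using t u by (simp add: bop_add ac_simps)
  have s: "\<forall>c x. T (hscale c x) + U (hscale c x) = hscale c (T x + U x)" using t u by (simp add: bop_scale hscale_add_right)
  show ?thesis unfolding bop_def using a s bd by blast
qed

lemma bop_opadd: "bop T \<Longrightarrow> bop U \<Longrightarrow> bop (opadd T (U::'a::chilbert \<Rightarrow> 'a))"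
  unfolding opadd_def by (rule bop_plus)

lemma bop_opscale: "bop T \<Longrightarrow> bop (opscale c (T::'a::chilbert \<Rightarrow> 'a))"
proof -
  assume t: "bop T"
  obtain K where K0: "K \<ge> 0" and K: "\<And>x. hnorm (T x) \<le> K * hnorm x" using bop_bound[OF t] by blast
  have "hnorm (hscale c (T x)) \<le> (cmod c * K) * hnorm x" for x
    using K[of x] by (simp add: hnorm_scale mult.assoc mult_left_mono)
  moreover have "hscale c (T (hscale d x)) = hscale d (hscale c (T x))" for d x
    using t by (simp add: bop_scale hscale_assoc mult.commute)
  ultimately show ?thesis unfolding bop_def opscale_def using t by (auto simp: bop_add hscale_add_right)
qed

lemma bop_sumop: "finite I \<Longrightarrow> (\<And>i. i \<in> I \<Longrightarrow> bop (f i)) \<Longrightarrow> bop (\<lambda>h. \<Sum>i\<in>I. f i (h::'a::chilbert))"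
proof (induction I rule: finite_induct)
  case empty thus ?case by (simp add: bop_zero_op)
next
  case (insert j I)
  have "bop (\<lambda>h. f j h + (\<Sum>i\<in>I. f i h))" using insert by (intro bop_plus) auto
  thus ?case using insert by simp
qed

lemma adj_comp: "bop T \<Longrightarrow> bop U \<Longrightarrow> adj (T \<circ> U) = adj U \<circ> adj (T::'a::chilbert \<Rightarrow> 'a)"
  by (intro adj_unique) (simp add: adj_prop)

lemma adj_id: "adj (id::'a::chilbert \<Rightarrow> 'a) = id"
  by (intro adj_unique) simp

lemma adj_opscale: "bop T \<Longrightarrow> adj (opscale c T) = opscale (cnj c) (adj (T::'a::chilbert \<Rightarrow> 'a))"
  by (intro adj_unique) (simp add: opscale_def hinner_scale_left hinner_scale_right adj_prop)

lemma adj_sumop: "finite I \<Longrightarrow> (\<And>i. i \<in> I \<Longrightarrow> bop (f i)) \<Longrightarrow>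
   adj (\<lambda>h. \<Sum>i\<in>I. f i (h::'a::chilbert)) = (\<lambda>h. \<Sum>i\<in>I. adj (f i) h)"
  by (intro adj_unique) (simp add: hinner_sum_left hinner_sum_right adj_prop)

lemma adj_BH: "T \<in> BH \<Longrightarrow> adj T \<in> BH" by (simp add: BH_def adj_bop)

lemma BH_family:
  assumes "G \<subseteq> BH"
  shows "BH \<in> {A. G \<subseteq> A \<and> A \<subseteq> BH
      \<and> (\<forall>T\<in>A. \<forall>U\<in>A. opadd T U \<in> A \<and> T \<circ> U \<in> A)
      \<and> (\<forall>c. \<forall>T\<in>A. opscale c T \<in> A)
      \<and> (\<forall>T\<in>A. adj T \<in> A)
      \<and> (\<forall>X T. (\<forall>k. X k \<in> A) \<and> T \<in> (BH::('a::chilbert \<Rightarrow> 'a) set) \<and> (\<lambda>k. opnorm (\<lambda>x. X k x - T x)) \<longlonglongrightarrow> 0 \<longrightarrow> T \<in> A)}"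
  using assms by (auto simp: BH_def bop_opadd bop_comp bop_opscale adj_bop)

lemma cstar_BH: "G \<subseteq> BH \<Longrightarrow> cstar_gen G \<subseteq> (BH::('a::chilbert \<Rightarrow> 'a) set)"
  unfolding cstar_gen_def by (rule Inter_lower[OF BH_family])

lemma cstar_base: "G \<subseteq> cstar_gen (G::('a::chilbert \<Rightarrow> 'a) set)"
  unfolding cstar_gen_def by blast

lemma cstar_opadd: "T \<in> cstar_gen G \<Longrightarrow> U \<in> cstar_gen G \<Longrightarrow> opadd T U \<in> cstar_gen (G::('a::chilbert \<Rightarrow> 'a) set)"
  unfolding cstar_gen_def by blast
lemma cstar_comp: "T \<in> cstar_gen G \<Longrightarrow> U \<in> cstar_gen G \<Longrightarrow> T \<circ> U \<in> cstar_gen (G::('a::chilbert \<Rightarrow> 'a) set)"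
  unfolding cstar_gen_def by blast
lemma cstar_opscale: "T \<in> cstar_gen G \<Longrightarrow> opscale c T \<in> cstar_gen (G::('a::chilbert \<Rightarrow> 'a) set)"
  unfolding cstar_gen_def by blast
lemma cstar_adj: "T \<in> cstar_gen G \<Longrightarrow> adj T \<in> cstar_gen (G::('a::chilbert \<Rightarrow> 'a) set)"
  unfolding cstar_gen_def by blast

lemma cstar_zero: "G \<noteq> {} \<Longrightarrow> (\<lambda>_. 0) \<in> cstar_gen (G::('a::chilbert \<Rightarrow> 'a) set)"
proof -
  assume "G \<noteq> {}"
  then obtain T where "T \<in> G" by blast
  hence "opscale 0 T \<in> cstar_gen G" using cstar_base cstar_opscale by blast
  moreover have "opscale 0 T = (\<lambda>_. 0)" by (simp add: opscale_def)
  ultimately show ?thesis by simp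
qed

lemma cstar_sumop: assumes G: "G \<noteq> {}" shows "finite I \<Longrightarrow> (\<And>i. i \<in> I \<Longrightarrow> f i \<in> cstar_gen G) \<Longrightarrow>
   (\<lambda>h. \<Sum>i\<in>I. f i (h::'a::chilbert)) \<in> cstar_gen G"
proof (induction I rule: finite_induct)
  case empty thus ?case using cstar_zero[OF G] by simp
next
  case (insert j I)
  have "opadd (f j) (\<lambda>h. \<Sum>i\<in>I. f i h) \<in> cstar_gen G" using insert by (intro cstar_opadd) auto
  thus ?case using insert by (simp add: opadd_def)
qed



lemma hscale_eq_0: "hscale c v = 0 \<Longrightarrow> v \<noteq> 0 \<Longrightarrow> c = (0::complex)" for v :: "'a::chilbert"
proof (rule ccontr)
  assume a: "hscale c v = 0" "v \<noteq> 0" "c \<noteq> 0"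
  have "v = hscale (1 / c) (hscale c v)" using a(3) by (simp add: hscale_assoc hscale_one)
  also have "\<dots> = 0" using a(1) by simp
  finally show False using a(2) by simp
qed

lemma hscale_same: "hscale c v = hscale d v \<Longrightarrow> v \<noteq> 0 \<Longrightarrow> c = (d::complex)" for v :: "'a::chilbert"
proof -
  assume a: "hscale c v = hscale d v" "v \<noteq> 0"
  have "hscale (c - d) v = 0"
    using a(1) hscale_add_left[of c "-d" v] by (simp add: hscale_minus_left)
  hence "c - d = 0" using a(2) by (rule hscale_eq_0)
  thus ?thesis by simp
qed

lemma sum2: "(\<Sum>p<(2::nat). f p) = f 0 + f 1"
  by (simp add: numeral_2_eq_2)

definition mat2 :: "('a::chilbert \<Rightarrow> 'a) \<Rightarrow> nat \<Rightarrow> nat \<Rightarrow> ('a \<Rightarrow> 'a)" where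
  "mat2 B p q = (if p = 0 \<and> q = 0 then id else if p = 0 then B else if q = 0 then adj B else adj B \<circ> B)"

lemma mat2_form:
  assumes "bop B"
  shows "(\<Sum>p<2. \<Sum>q<2. hinner (v p) (mat2 B p q (v q))) = hinner (v 0 + B (v 1)) (v 0 + B (v 1))"
proof -
  have "(\<Sum>p<2. \<Sum>q<2. hinner (v p) (mat2 B p q (v q))) =
     hinner (v 0) (v 0) + hinner (v 0) (B (v 1)) + (hinner (v 1) (adj B (v 0)) + hinner (v 1) (adj B (B (v 1))))"
    by (simp add: sum2 mat2_def)
  also have "hinner (v 1) (adj B (v 0)) = hinner (B (v 1)) (v 0)" using adj_prop[OF assms] by simp
  also have "hinner (v 1) (adj B (B (v 1))) = hinner (B (v 1)) (B (v 1))" using adj_prop[OF assms] by simp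
  finally show ?thesis by (simp add: hinner_add_left hinner_add_right)
qed

lemma matpos_mat2: "bop B \<Longrightarrow> matpos 2 (mat2 B)"
  unfolding matpos_def Let_def
proof (intro allI conjI)
  fix h :: "nat \<Rightarrow> 'a"
  assume b: "bop B"
  show "Im (\<Sum>i<2. \<Sum>j<2. hinner (h i) (mat2 B i j (h j))) = 0"
    unfolding mat2_form[OF b] by (simp add: hinner_self_real)
  show "0 \<le> Re (\<Sum>i<2. \<Sum>j<2. hinner (h i) (mat2 B i j (h j)))"
    unfolding mat2_form[OF b] by (simp add: hinner_self_real NN_nonneg)
qed

lemma matpos_Ad:
  assumes a: "bop a" and m: "matpos k Y"
  shows "matpos k (\<lambda>p q. a \<circ> Y p q \<circ> adj a)"
  unfolding matpos_def Let_def
proof (intro allI)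
  fix h :: "nat \<Rightarrow> 'a"
  have "(\<Sum>i<k. \<Sum>j<k. hinner (h i) ((a \<circ> Y i j \<circ> adj a) (h j))) =
        (\<Sum>i<k. \<Sum>j<k. hinner (adj a (h i)) (Y i j (adj a (h j))))"
    by (simp add: adj_prop2[OF a])
  thus "Im (\<Sum>i<k. \<Sum>j<k. hinner (h i) ((a \<circ> Y i j \<circ> adj a) (h j))) = 0 \<and>
        0 \<le> Re (\<Sum>i<k. \<Sum>j<k. hinner (h i) ((a \<circ> Y i j \<circ> adj a) (h j)))"
    using m unfolding matpos_def Let_def by metis
qed

lemma qlemma:
  fixes A al ga be :: complex and C :: real
  assumes im: "\<And>t. Im (A + cnj t * al + t * ga + cnj t * t * be) = 0"
    and pos: "\<And>t. 0 \<le> Re (A + cnj t * al + t * ga + cnj t * t * be)"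
    and up: "\<And>t. Re (A + cnj t * al + t * ga + cnj t * t * be) \<le> (cmod t)^2 * C"
  shows "al = 0 \<and> ga = 0"
proof -
  have i0: "Im A = 0" using im[of 0] by simp
  have i1: "Im A + Im al + Im ga + Im be = 0" using im[of 1] by simp
  have i2: "Im A - Im al - Im ga + Im be = 0" using im[of "-1"] by simp
  have i3: "Im A - Re al + Re ga + Im be = 0" using im[of "\<i>"] by simp
  have ibe: "Im be = 0" using i0 i1 i2 by simp
  have g: "ga = cnj al" using i0 i1 ibe i3 by (simp add: complex_eq_iff)
  have A0: "0 \<le> Re A" using pos[of 0] by simp
  have al0: "al = 0"
  proof (rule ccontr)
    assume nz: "al \<noteq> 0"
    define D where "D = C - Re be"
    define e :: real where "e = 1 / (\<bar>D\<bar> + 1)"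
    have e0: "e > 0" unfolding e_def by simp
    have eD: "e * D < 1"
    proof -
      have "e * D \<le> e * \<bar>D\<bar>" using e0 by (simp add: mult_left_mono)
      also have "\<dots> < 1" unfolding e_def by (simp add: field_simps)
      finally show ?thesis .
    qed
    define t where "t = complex_of_real e * al"
    have c1: "cnj t * al = complex_of_real (e * (cmod al)^2)"
      unfolding t_def by (simp add: mcnj2 mult.assoc)
    have c2: "t * ga = complex_of_real (e * (cmod al)^2)"
      unfolding t_def g by (simp add: mcnj1 mult.assoc)
    have ct: "(cmod t)^2 = e^2 * (cmod al)^2"
      unfolding t_def using e0 by (simp add: norm_mult power_mult_distrib)
    have c3: "cnj t * t = complex_of_real (e^2 * (cmod al)^2)"
      using ct by (simp only: mcnj2 of_real_power[symmetric])
    have "Re (A + cnj t * al + t * ga + cnj t * t * be) = Re A + 2 * e * (cmod al)^2 + e^2 * (cmod al)^2 * Re be"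
      unfolding c1 c2 c3 by simp
    moreover note ct
    ultimately have "Re A + 2 * e * (cmod al)^2 + e^2 * (cmod al)^2 * Re be \<le> e^2 * (cmod al)^2 * C"
      using up[of t] by simp
    hence "2 * e * (cmod al)^2 \<le> e^2 * (cmod al)^2 * D" using A0 unfolding D_def by (simp add: algebra_simps)
    hence "(e * (cmod al)^2) * 2 \<le> (e * (cmod al)^2) * (e * D)" by (simp add: power2_eq_square mult_ac)
    moreover have "e * (cmod al)^2 > 0" using e0 nz by simp
    ultimately have "2 \<le> e * D" using mult_le_cancel_left_pos by metis
    thus False using eD by simp
  qed
  thus ?thesis using g by simp
qed

locale cuntz =
  fixes S :: "nat \<Rightarrow> ('a::chilbert \<Rightarrow> 'a)" and n :: nat
  assumes n2: "n \<ge> 2"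
    and nz: "\<exists>x::'a. x \<noteq> 0"
    and iso: "\<forall>i<n. isometry (S i)"
    and csum: "\<forall>h. (\<Sum>i<n. S i (adj (S i) h)) = h"
begin

lemma SB: "i < n \<Longrightarrow> bop (S i)" using iso by (simp add: isometry_def)
lemma SI: "i < n \<Longrightarrow> adj (S i) (S i h) = h"
proof -
  assume "i < n"
  hence "adj (S i) \<circ> S i = id" using iso by (simp add: isometry_def)
  thus ?thesis by (metis comp_apply id_apply)
qed
lemma SaB: "i < n \<Longrightarrow> bop (adj (S i))" using SB adj_bop by blast

lemma GBH: "S ` {..<n} \<subseteq> BH" using SB by (auto simp: BH_def)
lemma Gne: "S ` {..<n} \<noteq> {}"
proof -
  have "S 0 \<in> S ` {..<n}" using n2 by simp
  thus ?thesis by blast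
qed

lemma OnB: "x \<in> cstar_gen (S ` {..<n}) \<Longrightarrow> bop x"
proof -
  assume "x \<in> cstar_gen (S ` {..<n})"
  hence "x \<in> BH" using cstar_BH[OF GBH] by (rule subsetD[rotated])
  thus ?thesis by (simp add: BH_def)
qed
lemma S_On: "i < n \<Longrightarrow> S i \<in> cstar_gen (S ` {..<n})"
proof -
  assume "i < n"
  hence "S i \<in> S ` {..<n}" by simp
  thus ?thesis using cstar_base[of "S ` {..<n}"] by (rule subsetD[rotated])
qed
lemma Sa_On: "i < n \<Longrightarrow> adj (S i) \<in> cstar_gen (S ` {..<n})"
  by (rule cstar_adj[OF S_On])
lemma P_On: "i < n \<Longrightarrow> S i \<circ> adj (S i) \<in> cstar_gen (S ` {..<n})"
  by (rule cstar_comp[OF S_On Sa_On])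

lemma id_On: "id \<in> cstar_gen (S ` {..<n})"
proof -
  have "(\<lambda>h. \<Sum>i\<in>{..<n}. (S i \<circ> adj (S i)) h) \<in> cstar_gen (S ` {..<n})"
    using Gne P_On by (intro cstar_sumop) (auto simp del: o_apply)
  moreover have "(\<lambda>h. \<Sum>i\<in>{..<n}. (S i \<circ> adj (S i)) h) = id" using csum by (simp add: fun_eq_iff)
  ultimately show ?thesis by simp
qed

lemma SS: assumes "i < n" "j < n" shows "adj (S i) (S j h) = (if i = j then h else 0)"
proof (cases "i = j")
  case True thus ?thesis using SI assms by simp
next
  case False
  define v where "v k = adj (S k) (S j h)" for k
  have vj: "v j = h" unfolding v_def using SI assms by simp
  have "hinner (S j h) (S j h) = hinner h h" using adj_prop[OF SB[OF assms(2)]] SI[OF assms(2)] by simp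
  moreover have "hinner (S j h) (S j h) = (\<Sum>k<n. hinner (v k) (v k))"
  proof -
    have "hinner (S j h) (S j h) = hinner (S j h) (\<Sum>k<n. S k (v k))" unfolding v_def using csum by simp
    also have "\<dots> = (\<Sum>k<n. hinner (S j h) (S k (v k)))" by (rule hinner_sum_right)
    also have "\<dots> = (\<Sum>k<n. hinner (v k) (v k))"
      by (rule sum.cong) (auto simp: adj_prop2[OF SB] v_def)
    finally show ?thesis .
  qed
  ultimately have e: "NN h = (\<Sum>k<n. NN (v k))" unfolding NN_def by (metis Re_sum)
  have "(\<Sum>k<n. NN (v k)) = NN (v j) + (\<Sum>k\<in>{..<n} - {j}. NN (v k))"
    using assms(2) by (simp add: sum.remove)
  hence "(\<Sum>k\<in>{..<n} - {j}. NN (v k)) = 0" using e vj by simp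
  hence "\<forall>k\<in>{..<n} - {j}. NN (v k) = 0" by (subst (asm) sum_nonneg_eq_0_iff) (auto simp: NN_nonneg)
  hence "NN (v i) = 0" using assms False by auto
  hence "v i = 0" using NN_eq_0 by blast
  thus ?thesis unfolding v_def using False by simp
qed

lemma SSsum: "j < n \<Longrightarrow> adj (S j) (\<Sum>i<n. S i (g i)) = g j"
proof -
  assume j: "j < n"
  have "adj (S j) (\<Sum>i<n. S i (g i)) = (\<Sum>i<n. adj (S j) (S i (g i)))" by (rule bop_sum[OF SaB[OF j]])
  also have "\<dots> = (\<Sum>i<n. if j = i then g i else 0)" using j by (intro sum.cong) (auto simp: SS)
  also have "\<dots> = g j" using j by simp
  finally show ?thesis .
qed

lemma Phi_mult: "(\<lambda>h. \<Sum>i<n. S i ((x \<circ> y) (adj (S i) h))) =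
   (\<lambda>h. \<Sum>i<n. S i (x (adj (S i) h))) \<circ> (\<lambda>h. \<Sum>i<n. S i (y (adj (S i) h)))"
  by (rule ext) (simp add: SSsum)

lemma Phi_id: "(\<lambda>h. \<Sum>i<n. S i (id (adj (S i) h))) = id"
  using csum by (simp add: fun_eq_iff)

lemma Phi_bop: "bop x \<Longrightarrow> bop (\<lambda>h. \<Sum>i<n. S i (x (adj (S i) h)))"
proof -
  assume x: "bop x"
  have "bop (\<lambda>h. \<Sum>i\<in>{..<n}. (S i \<circ> x \<circ> adj (S i)) h)"
    using x SB SaB by (intro bop_sumop) (auto intro!: bop_comp simp del: o_apply)
  thus ?thesis by simp
qed

lemma Phi_On: "x \<in> cstar_gen (S ` {..<n}) \<Longrightarrow> (\<lambda>h. \<Sum>i<n. S i (x (adj (S i) h))) \<in> cstar_gen (S ` {..<n})"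
proof -
  assume x: "x \<in> cstar_gen (S ` {..<n})"
  have "(\<lambda>h. \<Sum>i\<in>{..<n}. (S i \<circ> x \<circ> adj (S i)) h) \<in> cstar_gen (S ` {..<n})"
    using Gne x S_On Sa_On by (intro cstar_sumop) (auto intro!: cstar_comp simp del: o_apply)
  thus ?thesis by simp
qed

lemma Phi_adj: "bop x \<Longrightarrow> adj (\<lambda>h. \<Sum>i<n. S i (x (adj (S i) h))) = (\<lambda>h. \<Sum>i<n. S i (adj x (adj (S i) h)))"
proof -
  assume x: "bop x"
  have "adj (\<lambda>h. \<Sum>i\<in>{..<n}. (S i \<circ> x \<circ> adj (S i)) h) = (\<lambda>h. \<Sum>i\<in>{..<n}. adj (S i \<circ> x \<circ> adj (S i)) h)"
    using x SB SaB by (intro adj_sumop) (auto intro!: bop_comp simp del: o_apply)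
  also have "\<dots> = (\<lambda>h. \<Sum>i<n. S i (adj x (adj (S i) h)))"
    using x SB SaB by (intro ext sum.cong) (auto simp: adj_comp bop_comp adj_adj)
  finally show ?thesis by simp
qed

lemma P_comm: "bop x \<Longrightarrow> j < n \<Longrightarrow>
  S j (adj (S j) (\<Sum>i<n. S i (x (adj (S i) h)))) = (\<Sum>i<n. S i (x (adj (S i) (S j (adj (S j) h)))))"
proof -
  assume x: "bop x" and j: "j < n"
  have "(\<Sum>i<n. S i (x (adj (S i) (S j (adj (S j) h))))) = (\<Sum>i<n. if i = j then S j (x (adj (S j) h)) else 0)"
    using j by (intro sum.cong) (auto simp: SS bop_zero[OF x] bop_zero[OF SB])
  also have "\<dots> = S j (x (adj (S j) h))" using j by simp
  finally show ?thesis using j by (simp add: SSsum)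
qed

lemma Phi_matpos: "matpos k X \<Longrightarrow> matpos k (\<lambda>p q. (\<lambda>h. \<Sum>i<n. S i (X p q (adj (S i) h))))"
  unfolding matpos_def Let_def
proof (intro allI)
  fix h :: "nat \<Rightarrow> 'a"
  assume m: "\<forall>h. Im (\<Sum>i<k. \<Sum>j<k. hinner (h i) (X i j (h j))) = 0 \<and> 0 \<le> Re (\<Sum>i<k. \<Sum>j<k. hinner (h i) (X i j (h j)))"
  define F where "F l = (\<Sum>p<k. \<Sum>q<k. hinner (adj (S l) (h p)) (X p q (adj (S l) (h q))))" for l
  have "(\<Sum>p<k. \<Sum>q<k. hinner (h p) (\<Sum>i<n. S i (X p q (adj (S i) (h q))))) =
     (\<Sum>p<k. \<Sum>q<k. \<Sum>i<n. hinner (adj (S i) (h p)) (X p q (adj (S i) (h q))))"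
    by (intro sum.cong refl) (simp add: hinner_sum_right adj_prop2[OF SB])
  also have "\<dots> = (\<Sum>i<n. F i)" unfolding F_def
    by (simp add: sum.swap[of _ "{..<k}" "{..<n}"] sum.swap[of _ "{..<k}" "{..<n}"])
  finally have e: "(\<Sum>p<k. \<Sum>q<k. hinner (h p) (\<Sum>i<n. S i (X p q (adj (S i) (h q))))) = (\<Sum>i<n. F i)" .
  have Fi: "Im (F l) = 0 \<and> 0 \<le> Re (F l)" for l unfolding F_def using m[THEN spec, of "\<lambda>p. adj (S l) (h p)"] by simp
  show "Im (\<Sum>p<k. \<Sum>q<k. hinner (h p) (\<Sum>i<n. S i (X p q (adj (S i) (h q))))) = 0 \<and>
     0 \<le> Re (\<Sum>p<k. \<Sum>q<k. hinner (h p) (\<Sum>i<n. S i (X p q (adj (S i) (h q)))))"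
    unfolding e using Fi by (simp add: Im_sum Re_sum sum_nonneg)
qed

end



lemma expand2:
  fixes M :: "nat \<Rightarrow> nat \<Rightarrow> ('a::chilbert \<Rightarrow> 'a)"
  assumes b00: "bop (M 0 0)" and b01: "bop (M 0 1)" and b10: "bop (M 1 0)"
  shows "(\<Sum>p<2. \<Sum>q<2. hinner ((\<lambda>p. if p = 0 then u + hscale t hh else w) p) (M p q ((\<lambda>p. if p = 0 then u + hscale t hh else w) q)))
   = (hinner u (M 0 0 u) + hinner u (M 0 1 w) + hinner w (M 1 0 u) + hinner w (M 1 1 w))
     + cnj t * (hinner hh (M 0 0 u) + hinner hh (M 0 1 w))
     + t * (hinner u (M 0 0 hh) + hinner w (M 1 0 hh))
     + cnj t * t * hinner hh (M 0 0 hh)"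
proof -
  have b10': "bop (M (Suc 0) 0)" using b10 by simp
  show ?thesis
  by (simp add: sum2 bop_add[OF b00] bop_scale[OF b00] bop_add[OF b10'] bop_scale[OF b10']
      hinner_add_left hinner_add_right hinner_scale_left hinner_scale_right algebra_simps)
qed

context cuntz
begin

lemma S_nz: "i < n \<Longrightarrow> x \<noteq> 0 \<Longrightarrow> S i x \<noteq> 0"
proof
  assume a: "i < n" "x \<noteq> 0" "S i x = 0"
  have "x = adj (S i) (S i x)" using SI[OF a(1)] by simp
  also have "\<dots> = 0" using a(3) bop_zero[OF SaB[OF a(1)]] by simp
  finally show False using a(2) by simp
qed

lemma P0_not_scalar: "\<not> (\<forall>h. S 0 (adj (S 0) h) = hscale c h)"
proof
  assume a: "\<forall>h. S 0 (adj (S 0) h) = hscale c h"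
  obtain x0 :: 'a where x0: "x0 \<noteq> 0" using nz by blast
  have n0: "0 < n" and n1: "1 < n" using n2 by auto
  have "S 0 x0 = hscale c (S 0 x0)" using a[rule_format, of "S 0 x0"] SI[OF n0, of x0] by simp
  hence "hscale 1 (S 0 x0) = hscale c (S 0 x0)" by (simp add: hscale_one)
  hence c1: "1 = c" using S_nz[OF n0 x0] by (rule hscale_same)
  have "S 0 (adj (S 0) (S 1 x0)) = 0" using SS[OF n0 n1] bop_zero[OF SB[OF n0]] by simp
  hence "S 1 x0 = 0" using a c1 by (simp add: hscale_one)
  thus False using S_nz[OF n1 x0] by simp
qed

lemma P_bop: "i < n \<Longrightarrow> bop (S i \<circ> adj (S i))"
  using SB SaB bop_comp by blast

lemma P_idem: "i < n \<Longrightarrow> S i (adj (S i) (S i (adj (S i) h))) = S i (adj (S i) h)"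
  using SI by simp

lemma P_adj: "i < n \<Longrightarrow> adj (S i \<circ> adj (S i)) = S i \<circ> adj (S i)"
  using SB SaB by (simp add: adj_comp adj_adj)

lemma part_i: "commutant ((\<lambda>x h. \<Sum>i<n. S i (x (adj (S i) h))) ` cstar_gen (S ` {..<n})) \<noteq> scalar_ops"
proof
  assume eq: "commutant ((\<lambda>x h. \<Sum>i<n. S i (x (adj (S i) h))) ` cstar_gen (S ` {..<n})) = scalar_ops"
  have n0: "0 < n" using n2 by simp
  have "S 0 \<circ> adj (S 0) \<in> commutant ((\<lambda>x h. \<Sum>i<n. S i (x (adj (S i) h))) ` cstar_gen (S ` {..<n}))"
    unfolding commutant_def
  proof (intro CollectI conjI ballI)
    show "S 0 \<circ> adj (S 0) \<in> BH" using P_bop[OF n0] by (simp add: BH_def)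
    fix y assume "y \<in> (\<lambda>x h. \<Sum>i<n. S i (x (adj (S i) h))) ` cstar_gen (S ` {..<n})"
    then obtain x where x: "x \<in> cstar_gen (S ` {..<n})" and y: "y = (\<lambda>h. \<Sum>i<n. S i (x (adj (S i) h)))" by blast
    show "(S 0 \<circ> adj (S 0)) \<circ> y = y \<circ> (S 0 \<circ> adj (S 0))"
      unfolding y by (rule ext) (simp add: P_comm[OF OnB[OF x] n0])
  qed
  hence "S 0 \<circ> adj (S 0) \<in> scalar_ops" using eq by simp
  then obtain c where "S 0 \<circ> adj (S 0) = opscale c id" unfolding scalar_ops_def by blast
  hence "\<forall>h. S 0 (adj (S 0) h) = hscale c h" by (metis comp_apply id_apply opscale_def)
  thus False using P0_not_scalar by blast
qed

lemma CP_Phi: "CP (cstar_gen (S ` {..<n})) (\<lambda>x h. \<Sum>i<n. S i (x (adj (S i) h)))"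
proof -
  have lin: "linear_on (cstar_gen (S ` {..<n})) (\<lambda>x h. \<Sum>i<n. S i (x (adj (S i) h)))"
    unfolding linear_on_def
  proof (intro conjI ballI allI)
    fix x y assume x: "x \<in> cstar_gen (S ` {..<n})" and y: "y \<in> cstar_gen (S ` {..<n})"
    show "(\<lambda>h. \<Sum>i<n. S i (opadd x y (adj (S i) h))) = opadd (\<lambda>h. \<Sum>i<n. S i (x (adj (S i) h))) (\<lambda>h. \<Sum>i<n. S i (y (adj (S i) h)))"
      unfolding opadd_def by (rule ext) (simp add: bop_add[OF SB] sum.distrib)
  next
    fix c x assume x: "x \<in> cstar_gen (S ` {..<n})"
    show "(\<lambda>h. \<Sum>i<n. S i (opscale c x (adj (S i) h))) = opscale c (\<lambda>h. \<Sum>i<n. S i (x (adj (S i) h)))"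
      unfolding opscale_def by (rule ext) (simp add: bop_scale[OF SB] hscale_sum_right)
  qed
  have img: "(\<lambda>x h. \<Sum>i<n. S i (x (adj (S i) h))) ` cstar_gen (S ` {..<n}) \<subseteq> cstar_gen (S ` {..<n})"
    using Phi_On by blast
  have mp: "\<forall>k X. (\<forall>i j. X i j \<in> cstar_gen (S ` {..<n})) \<and> matpos k X \<longrightarrow>
      matpos k (\<lambda>i j. (\<lambda>x h. \<Sum>i<n. S i (x (adj (S i) h))) (X i j))"
    using Phi_matpos by simp
  show ?thesis unfolding CP_def using lin img mp by blast
qed

lemma Phi_mat2: "bop b \<Longrightarrow> (\<lambda>h. \<Sum>i<n. S i (mat2 b p q (adj (S i) h))) = mat2 (\<lambda>h. \<Sum>i<n. S i (b (adj (S i) h))) p q"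
proof -
  assume bB: "bop b"
  have ab: "(\<lambda>h. \<Sum>i<n. S i (adj b (adj (S i) h))) = adj (\<lambda>h. \<Sum>i<n. S i (b (adj (S i) h)))"
    using Phi_adj[OF bB] by simp
  show ?thesis
  proof (cases "p = 0 \<and> q = 0")
    case True thus ?thesis unfolding mat2_def using Phi_id by simp
  next
    case F1: False
    show ?thesis
    proof (cases "p = 0")
      case True thus ?thesis using F1 unfolding mat2_def by simp
    next
      case F2: False
      show ?thesis
      proof (cases "q = 0")
        case True thus ?thesis using F1 F2 ab unfolding mat2_def by simp
      next
        case False
        have "(\<lambda>h. \<Sum>i<n. S i ((adj b \<circ> b) (adj (S i) h))) =
          (\<lambda>h. \<Sum>i<n. S i (adj b (adj (S i) h))) \<circ> (\<lambda>h. \<Sum>i<n. S i (b (adj (S i) h)))"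
          by (rule Phi_mult)
        thus ?thesis using F1 F2 False ab unfolding mat2_def by simp
      qed
    qed
  qed
qed

lemma mat2_On: assumes b: "b \<in> cstar_gen (S ` {..<n})" shows "mat2 b p q \<in> cstar_gen (S ` {..<n})"
  unfolding mat2_def using id_On b cstar_adj[OF b] cstar_comp[OF cstar_adj[OF b] b] by auto

lemma opext_Phi: "operational_extreme (cstar_gen (S ` {..<n})) (\<lambda>x h. \<Sum>i<n. S i (x (adj (S i) h)))"
  unfolding operational_extreme_def
proof (intro conjI allI impI)
  show "CP (cstar_gen (S ` {..<n})) (\<lambda>x h. \<Sum>i<n. S i (x (adj (S i) h)))" by (rule CP_Phi)
  fix m a \<Psi>
  assume adm: "admissible_decomp (cstar_gen (S ` {..<n})) (\<lambda>x h. \<Sum>i<n. S i (x (adj (S i) h))) m a \<Psi>"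
  have aOn: "\<And>i. i < m \<Longrightarrow> a i \<in> cstar_gen (S ` {..<n})"
    and CPi: "\<And>i. i < m \<Longrightarrow> CP (cstar_gen (S ` {..<n})) (\<Psi> i)"
    and dec: "\<And>x h. x \<in> cstar_gen (S ` {..<n}) \<Longrightarrow> (\<Sum>i<n. S i (x (adj (S i) h))) = (\<Sum>i<m. Ad (a i) (\<Psi> i x) h)"
    using adm unfolding admissible_decomp_def by auto
  have PsiOn: "\<And>i x. i < m \<Longrightarrow> x \<in> cstar_gen (S ` {..<n}) \<Longrightarrow> \<Psi> i x \<in> cstar_gen (S ` {..<n})"
    using CPi unfolding CP_def by blast
  have PsiM: "\<And>i k X. i < m \<Longrightarrow> (\<forall>p q. X p q \<in> cstar_gen (S ` {..<n})) \<Longrightarrow> matpos k X \<Longrightarrow> matpos k (\<lambda>p q. \<Psi> i (X p q))"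
    using CPi unfolding CP_def by blast
  define th where "th i x = a i \<circ> \<Psi> i x \<circ> adj (a i)" for i x
  have thAd: "Ad (a i) (\<Psi> i x) = th i x" for i x unfolding th_def Ad_def ..
  have aB: "\<And>i. i < m \<Longrightarrow> bop (a i)" using aOn OnB by blast
  have thB: "\<And>i x. i < m \<Longrightarrow> x \<in> cstar_gen (S ` {..<n}) \<Longrightarrow> bop (th i x)"
    unfolding th_def using aB PsiOn OnB adj_bop bop_comp by meson
  define z where "z i = th i id" for i
  have key: "th i b = z i \<circ> (\<lambda>h. \<Sum>i<n. S i (b (adj (S i) h))) \<and>
       th i (adj b) = adj (\<lambda>h. \<Sum>i<n. S i (b (adj (S i) h))) \<circ> z i"
    if i: "i < m" and b: "b \<in> cstar_gen (S ` {..<n})" for i b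
  proof -
    have bB: "bop b" using OnB[OF b] .
    define B where "B = (\<lambda>h. \<Sum>i<n. S i (b (adj (S i) h)))"
    have BB: "bop B" unfolding B_def using Phi_bop[OF bB] .
    have XOn: "\<forall>p q. mat2 b p q \<in> cstar_gen (S ` {..<n})" using mat2_On[OF b] by blast
    have Mj: "matpos 2 (\<lambda>p q. th j (mat2 b p q))" if j: "j < m" for j
    proof -
      have "matpos 2 (\<lambda>p q. \<Psi> j (mat2 b p q))" using PsiM[OF j XOn matpos_mat2[OF bB]] .
      from matpos_Ad[OF aB[OF j] this] show ?thesis unfolding th_def .
    qed
    have ag: "hinner hh (z i (B kk)) + hinner hh (th i b (- kk)) = 0 \<and>
              hinner (B kk) (z i hh) + hinner (- kk) (th i (adj b) hh) = 0" for kk hh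
    proof -
      define v where "v t = (\<lambda>p::nat. if p = 0 then B kk + hscale t hh else - kk)" for t
      define Q where "Q j t = (\<Sum>p<2. \<Sum>q<2. hinner (v t p) (th j (mat2 b p q) (v t q)))" for j t
      have Qpos: "Im (Q j t) = 0 \<and> 0 \<le> Re (Q j t)" if j: "j < m" for j t
        using Mj[OF j] unfolding matpos_def Let_def Q_def by blast
      have Qsum: "(\<Sum>j<m. Q j t) = cnj t * t * hinner hh hh" for t
      proof -
        have "(\<Sum>j<m. Q j t) = (\<Sum>p<2. \<Sum>q<2. \<Sum>j<m. hinner (v t p) (th j (mat2 b p q) (v t q)))"
          unfolding Q_def by (simp add: sum.swap[of _ "{..<m}" "{..<2::nat}"])
        also have "\<dots> = (\<Sum>p<2. \<Sum>q<2. hinner (v t p) (\<Sum>j<m. th j (mat2 b p q) (v t q)))"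
          by (simp add: hinner_sum_right)
        also have "\<dots> = (\<Sum>p<2. \<Sum>q<2. hinner (v t p) (mat2 B p q (v t q)))"
        proof (intro sum.cong refl)
          fix p q
          have "(\<Sum>j<m. th j (mat2 b p q) (v t q)) = (\<Sum>i<n. S i (mat2 b p q (adj (S i) (v t q))))"
            using dec[OF mat2_On[OF b, of p q], of "v t q"] by (simp add: thAd)
          also have "\<dots> = mat2 B p q (v t q)" using Phi_mat2[OF bB, of p q] unfolding B_def by metis
          finally show "hinner (v t p) (\<Sum>j<m. th j (mat2 b p q) (v t q)) = hinner (v t p) (mat2 B p q (v t q))" by simp
        qed
        also have "\<dots> = hinner (v t 0 + B (v t 1)) (v t 0 + B (v t 1))" by (rule mat2_form[OF BB])
        also have "v t 0 + B (v t 1) = hscale t hh" unfolding v_def by (simp add: bop_minus[OF BB])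
        finally show ?thesis by (simp add: hinner_scale_left hinner_scale_right)
      qed
      have Qup: "Re (Q i t) \<le> (cmod t)^2 * NN hh" for t
      proof -
        have "Re (Q i t) \<le> (\<Sum>j<m. Re (Q j t))"
          using i Qpos by (intro member_le_sum) auto
        also have "\<dots> = Re (\<Sum>j<m. Q j t)" by (simp add: Re_sum)
        also have "\<dots> = (cmod t)^2 * NN hh" unfolding Qsum mcnj2 by (simp add: hinner_self_real)
        finally show ?thesis .
      qed
      have Mb: "bop (th i (mat2 b 0 0))" "bop (th i (mat2 b 0 1))" "bop (th i (mat2 b 1 0))"
        using thB[OF i] mat2_On[OF b] by auto
      define A where "A = hinner (B kk) (th i (mat2 b 0 0) (B kk)) + hinner (B kk) (th i (mat2 b 0 1) (- kk))
            + hinner (- kk) (th i (mat2 b 1 0) (B kk)) + hinner (- kk) (th i (mat2 b 1 1) (- kk))"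
      define al where "al = hinner hh (th i (mat2 b 0 0) (B kk)) + hinner hh (th i (mat2 b 0 1) (- kk))"
      define ga where "ga = hinner (B kk) (th i (mat2 b 0 0) hh) + hinner (- kk) (th i (mat2 b 1 0) hh)"
      define be where "be = hinner hh (th i (mat2 b 0 0) hh)"
      have Qexp: "Q i t = A + cnj t * al + t * ga + cnj t * t * be" for t
        unfolding Q_def v_def A_def al_def ga_def be_def using expand2[of "\<lambda>p q. th i (mat2 b p q)", OF Mb] by simp
      have "al = 0 \<and> ga = 0"
      proof (rule qlemma)
        fix t
        show "Im (A + cnj t * al + t * ga + cnj t * t * be) = 0" using Qpos[OF i, of t] unfolding Qexp by simp
        show "0 \<le> Re (A + cnj t * al + t * ga + cnj t * t * be)" using Qpos[OF i, of t] unfolding Qexp by simp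
        show "Re (A + cnj t * al + t * ga + cnj t * t * be) \<le> (cmod t)^2 * NN hh" using Qup[of t] unfolding Qexp by simp
      qed
      hence "hinner hh (th i (mat2 b 0 0) (B kk)) + hinner hh (th i (mat2 b 0 1) (- kk)) = 0 \<and>
            hinner (B kk) (th i (mat2 b 0 0) hh) + hinner (- kk) (th i (mat2 b 1 0) hh) = 0"
        unfolding al_def ga_def .
      moreover have "mat2 b 0 0 = id" "mat2 b 0 1 = b" "mat2 b 1 0 = adj b" by (simp_all add: mat2_def)
      ultimately show ?thesis unfolding z_def by simp
    qed
    have e1: "th i b kk = z i (B kk)" for kk
    proof -
      have "z i (B kk) + th i b (- kk) = 0"
      proof (rule hinner_ext)
        fix x show "hinner x (z i (B kk) + th i b (- kk)) = hinner x 0"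
          using ag[where kk=kk and hh=x] by (simp add: hinner_add_right)
      qed
      thus ?thesis using bop_minus[OF thB[OF i b]] by (simp add: add_eq_0_iff2)
    qed
    have e2: "th i (adj b) hh = adj B (z i hh)" for hh
    proof (rule hinner_ext)
      fix kk
      have "hinner (B kk) (z i hh) + hinner (- kk) (th i (adj b) hh) = 0" using ag by blast
      thus "hinner kk (th i (adj b) hh) = hinner kk (adj B (z i hh))"
        by (simp add: hinner_minus_left adj_prop[OF BB])
    qed
    show ?thesis using e1 e2 unfolding B_def by (simp add: fun_eq_iff)
  qed
  show "\<exists>z. \<forall>i<m. z i \<in> commutant ((\<lambda>x h. \<Sum>i<n. S i (x (adj (S i) h))) ` cstar_gen (S ` {..<n})) \<and>
          (\<forall>x\<in>cstar_gen (S ` {..<n}). Ad (a i) (\<Psi> i x) = z i \<circ> (\<lambda>h. \<Sum>i<n. S i (x (adj (S i) h))))"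
  proof (intro exI allI impI conjI ballI)
    fix i assume i: "i < m"
    show "z i \<in> commutant ((\<lambda>x h. \<Sum>i<n. S i (x (adj (S i) h))) ` cstar_gen (S ` {..<n}))"
      unfolding commutant_def
    proof (intro CollectI conjI ballI)
      show "z i \<in> BH" unfolding z_def BH_def using thB[OF i id_On] by simp
      fix y assume "y \<in> (\<lambda>x h. \<Sum>i<n. S i (x (adj (S i) h))) ` cstar_gen (S ` {..<n})"
      then obtain x where x: "x \<in> cstar_gen (S ` {..<n})" and y: "y = (\<lambda>h. \<Sum>i<n. S i (x (adj (S i) h)))" by blast
      have xB: "bop x" using OnB[OF x] .
      have k1: "th i x = z i \<circ> y" using key[OF i x] y by simp
      have "th i (adj (adj x)) = adj (\<lambda>h. \<Sum>i<n. S i (adj x (adj (S i) h))) \<circ> z i"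
        using key[OF i cstar_adj[OF x]] by blast
      also have "adj (adj x) = x" using adj_adj[OF xB] .
      also have "(\<lambda>h. \<Sum>i<n. S i (adj x (adj (S i) h))) = adj y" unfolding y using Phi_adj[OF xB] by simp
      also have "adj (adj y) = y" unfolding y using adj_adj[OF Phi_bop[OF xB]] by simp
      finally have "th i x = y \<circ> z i" .
      thus "z i \<circ> y = y \<circ> z i" using k1 by simp
    qed
  next
    fix i x assume i: "i < m" and x: "x \<in> cstar_gen (S ` {..<n})"
    show "Ad (a i) (\<Psi> i x) = z i \<circ> (\<lambda>h. \<Sum>i<n. S i (x (adj (S i) h)))"
      using key[OF i x] by (simp add: thAd)
  qed
qed

end


context cuntz
begin

lemma not_numerical: "\<not> numerical_operational_extreme (cstar_gen (S ` {..<n})) (\<lambda>x h. \<Sum>i<n. S i (x (adj (S i) h)))"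
proof
  assume ne: "numerical_operational_extreme (cstar_gen (S ` {..<n})) (\<lambda>x h. \<Sum>i<n. S i (x (adj (S i) h)))"
  define a where "a i = S i \<circ> adj (S i)" for i
  have aa: "i < n \<Longrightarrow> adj (a i) = a i" for i unfolding a_def by (rule P_adj)
  have adm: "admissible_decomp (cstar_gen (S ` {..<n})) (\<lambda>x h. \<Sum>i<n. S i (x (adj (S i) h))) n a
        (\<lambda>_. (\<lambda>x h. \<Sum>i<n. S i (x (adj (S i) h))))"
    unfolding admissible_decomp_def
  proof (intro conjI allI ballI impI)
    fix i assume i: "i < n"
    show "CP (cstar_gen (S ` {..<n})) (\<lambda>x h. \<Sum>i<n. S i (x (adj (S i) h)))" by (rule CP_Phi)
    show "a i \<in> cstar_gen (S ` {..<n})" unfolding a_def by (rule P_On[OF i])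
    show "a i \<noteq> (\<lambda>_. 0)"
    proof
      assume z: "a i = (\<lambda>_. 0)"
      obtain x0 :: 'a where x0: "x0 \<noteq> 0" using nz by blast
      have "a i (S i x0) = S i x0" unfolding a_def using SI[OF i] by simp
      thus False using z S_nz[OF i x0] by simp
    qed
  next
    fix h
    have "(\<Sum>i<n. a i (adj (a i) h)) = (\<Sum>i<n. S i (adj (S i) h))"
      by (intro sum.cong refl) (simp add: aa, simp add: a_def SI)
    thus "(\<Sum>i<n. a i (adj (a i) h)) = h" using csum by simp
  next
    fix x h assume x: "x \<in> cstar_gen (S ` {..<n})"
    have "(\<Sum>i<n. Ad (a i) (\<lambda>h. \<Sum>i<n. S i (x (adj (S i) h))) h) = (\<Sum>i<n. S i (adj (S i) (\<Sum>i<n. S i (x (adj (S i) h)))))"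
    proof (intro sum.cong refl)
      fix i assume "i \<in> {..<n}"
      hence i: "i < n" by simp
      have "Ad (a i) (\<lambda>h. \<Sum>i<n. S i (x (adj (S i) h))) h
          = S i (adj (S i) (\<Sum>j<n. S j (x (adj (S j) (S i (adj (S i) h))))))"
        unfolding Ad_def aa[OF i] by (simp add: a_def)
      also have "(\<Sum>j<n. S j (x (adj (S j) (S i (adj (S i) h))))) = S i (adj (S i) (\<Sum>j<n. S j (x (adj (S j) h))))"
        using P_comm[OF OnB[OF x] i] by simp
      finally show "Ad (a i) (\<lambda>h. \<Sum>i<n. S i (x (adj (S i) h))) h = S i (adj (S i) (\<Sum>i<n. S i (x (adj (S i) h))))"
        using SI[OF i] by simp
    qed
    also have "\<dots> = (\<Sum>i<n. S i (x (adj (S i) h)))" using csum by simp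
    finally show "(\<lambda>x h. \<Sum>i<n. S i (x (adj (S i) h))) x h = (\<Sum>i<n. Ad (a i) ((\<lambda>_. (\<lambda>x h. \<Sum>i<n. S i (x (adj (S i) h)))) i x) h)"
      by simp
  qed
  obtain t where t: "\<forall>i<n. 0 \<le> t i \<and> (\<forall>x\<in>cstar_gen (S ` {..<n}).
     Ad (a i) ((\<lambda>_. (\<lambda>x h. \<Sum>i<n. S i (x (adj (S i) h)))) i x) = opscale (complex_of_real (t i)) ((\<lambda>x h. \<Sum>i<n. S i (x (adj (S i) h))) x))"
    using ne adm unfolding numerical_operational_extreme_def by blast
  have n0: "0 < n" using n2 by simp
  have "\<forall>x\<in>cstar_gen (S ` {..<n}). Ad (a 0) (\<lambda>h. \<Sum>i<n. S i (x (adj (S i) h))) =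
      opscale (complex_of_real (t 0)) (\<lambda>h. \<Sum>i<n. S i (x (adj (S i) h)))"
    using t n0 by blast
  hence "Ad (a 0) (\<lambda>h. \<Sum>i<n. S i (id (adj (S i) h))) = opscale (complex_of_real (t 0)) (\<lambda>h. \<Sum>i<n. S i (id (adj (S i) h)))"
    using id_On by blast
  hence "Ad (a 0) id = opscale (complex_of_real (t 0)) id" unfolding Phi_id .
  hence "\<forall>h. S 0 (adj (S 0) h) = hscale (complex_of_real (t 0)) h"
    unfolding Ad_def aa[OF n0] opscale_def by (simp add: a_def fun_eq_iff SI[OF n0])
  thus False using P0_not_scalar by blast
qed

lemma sum_const_vec: "(\<Sum>i<n. h) = hscale (of_nat n) h"
proof -
  have "(\<Sum>i<n. h) = (\<Sum>i<n. hscale 1 h)" by (simp add: hscale_one)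
  also have "\<dots> = hscale (\<Sum>i<n. 1) h" by (rule hscale_sum_left[symmetric])
  finally show ?thesis by simp
qed

lemma Psi_id: "(\<lambda>h. hscale (1 / of_nat n) (\<Sum>i<n. adj (S i) (id (S i h)))) = id"
proof
  fix h :: 'a
  have "(\<Sum>i<n. adj (S i) (id (S i h))) = (\<Sum>i<n. h)" by (intro sum.cong refl) (simp add: SI)
  also have "\<dots> = hscale (of_nat n) h" by (rule sum_const_vec)
  finally have "hscale (1 / of_nat n) (\<Sum>i<n. adj (S i) (id (S i h))) = hscale (1 / of_nat n * of_nat n) h"
    by (simp add: hscale_assoc)
  also have "1 / of_nat n * (of_nat n :: complex) = 1" using n2 by simp
  finally show "hscale (1 / of_nat n) (\<Sum>i<n. adj (S i) (id (S i h))) = id h" by (simp add: hscale_one)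
qed

lemma Psi_P0: "(\<lambda>h. hscale (1 / of_nat n) (\<Sum>i<n. adj (S i) ((S 0 \<circ> adj (S 0)) (S i h)))) = (\<lambda>h. hscale (1 / of_nat n) h)"
proof
  fix h :: 'a
  have n0: "0 < n" using n2 by simp
  have "(\<Sum>i<n. adj (S i) ((S 0 \<circ> adj (S 0)) (S i h))) = (\<Sum>i<n. if i = 0 then h else 0)"
  proof (intro sum.cong refl)
    fix i assume "i \<in> {..<n}"
    hence i: "i < n" by simp
    show "adj (S i) ((S 0 \<circ> adj (S 0)) (S i h)) = (if i = 0 then h else 0)"
    proof (cases "i = 0")
      case True thus ?thesis using SI[OF n0] by simp
    next
      case False
      hence "adj (S 0) (S i h) = 0" using SS[OF n0 i] by simp
      thus ?thesis using False bop_zero[OF SB[OF n0]] bop_zero[OF SaB[OF i]] by simp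
    qed
  qed
  also have "\<dots> = h" using n0 by simp
  finally show "hscale (1 / of_nat n) (\<Sum>i<n. adj (S i) ((S 0 \<circ> adj (S 0)) (S i h))) = hscale (1 / of_nat n) h" by simp
qed

lemma c_facts: "(1 / of_nat n :: complex) \<noteq> 0" "(1 / of_nat n :: complex) * (1 / of_nat n) \<noteq> 1 / of_nat n"
proof -
  show "(1 / of_nat n :: complex) \<noteq> 0" using n2 by simp
  show "(1 / of_nat n :: complex) * (1 / of_nat n) \<noteq> 1 / of_nat n"
  proof
    assume "(1 / of_nat n :: complex) * (1 / of_nat n) = 1 / of_nat n"
    hence "(1 / of_nat n :: complex) * (1 / of_nat n) = 1 * (1 / of_nat n)" by simp
    moreover have "(1 / of_nat n :: complex) \<noteq> 0" using n2 by simp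
    ultimately have "(1 / of_nat n :: complex) = 1" by (rule mult_right_cancel[THEN iffD1, rotated])
    hence "(of_nat n :: complex) = 1" by (simp only: divide_eq_1_iff)
    hence "n = 1" by simp
    thus False using n2 by simp
  qed
qed

lemma not_jordan: "\<not> jordan_hom_on (cstar_gen (S ` {..<n})) (\<lambda>x h. hscale (1 / of_nat n) (\<Sum>i<n. adj (S i) (x (S i h))))"
proof
  assume j: "jordan_hom_on (cstar_gen (S ` {..<n})) (\<lambda>x h. hscale (1 / of_nat n) (\<Sum>i<n. adj (S i) (x (S i h))))"
  have n0: "0 < n" using n2 by simp
  have "(\<lambda>h. hscale (1 / of_nat n) (\<Sum>i<n. adj (S i) (((S 0 \<circ> adj (S 0)) \<circ> (S 0 \<circ> adj (S 0))) (S i h))))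
     = (\<lambda>h. hscale (1 / of_nat n) (\<Sum>i<n. adj (S i) ((S 0 \<circ> adj (S 0)) (S i h)))) \<circ> (\<lambda>h. hscale (1 / of_nat n) (\<Sum>i<n. adj (S i) ((S 0 \<circ> adj (S 0)) (S i h))))"
    using j P_On[OF n0] P_adj[OF n0] unfolding jordan_hom_on_def by blast
  moreover have e: "(S 0 \<circ> adj (S 0)) \<circ> (S 0 \<circ> adj (S 0)) = S 0 \<circ> adj (S 0)" using SI[OF n0] by (simp add: fun_eq_iff)
  ultimately have "(\<lambda>h. hscale (1 / of_nat n) (\<Sum>i<n. adj (S i) ((S 0 \<circ> adj (S 0)) (S i h))))
     = (\<lambda>h. hscale (1 / of_nat n) (\<Sum>i<n. adj (S i) ((S 0 \<circ> adj (S 0)) (S i h)))) \<circ> (\<lambda>h. hscale (1 / of_nat n) (\<Sum>i<n. adj (S i) ((S 0 \<circ> adj (S 0)) (S i h))))"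
    by (simp only:)
  hence "(\<lambda>h. hscale (1 / of_nat n) h) = (\<lambda>h. hscale (1 / of_nat n) h) \<circ> (\<lambda>h. hscale (1 / of_nat n) (h::'a))"
    unfolding Psi_P0 .
  moreover obtain x0 :: 'a where x0: "x0 \<noteq> 0" using nz by blast
  ultimately have "hscale (1 / of_nat n) x0 = hscale ((1 / of_nat n) * (1 / of_nat n)) x0"
    by (metis comp_apply hscale_assoc)
  hence "(1 / of_nat n :: complex) = (1 / of_nat n) * (1 / of_nat n)" using x0 by (rule hscale_same)
  thus False using c_facts(2) by simp
qed

lemma not_opext_Psi: "\<not> operational_extreme (cstar_gen (S ` {..<n})) (\<lambda>x h. hscale (1 / of_nat n) (\<Sum>i<n. adj (S i) (x (S i h))))"
proof
  assume oe: "operational_extreme (cstar_gen (S ` {..<n})) (\<lambda>x h. hscale (1 / of_nat n) (\<Sum>i<n. adj (S i) (x (S i h))))"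
  have n0: "0 < n" using n2 by simp
  define c :: complex where "c = 1 / of_nat n"
  define s :: complex where "s = complex_of_real (1 / sqrt (real n))"
  have ss: "s * s = c"
  proof -
    have "s * s = complex_of_real ((1 / sqrt (real n)) * (1 / sqrt (real n)))" unfolding s_def by (simp only: of_real_mult)
    also have "(1 / sqrt (real n)) * (1 / sqrt (real n)) = 1 / (sqrt (real n) * sqrt (real n))" by simp
    also have "sqrt (real n) * sqrt (real n) = real n" by simp
    also have "complex_of_real (1 / real n) = c" unfolding c_def by simp
    finally show ?thesis .
  qed
  have s0: "s \<noteq> 0" unfolding s_def using n2 by simp
  have cs: "cnj s = s" unfolding s_def by simp
  define a where "a i = opscale s (id::'a \<Rightarrow> 'a)" for i :: nat
  define Ps where "Ps i x = adj (S i) \<circ> x \<circ> S i" for i x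
  have aa: "adj (a i) = a i" for i
  proof -
    have "adj (opscale s id) = opscale (cnj s) (adj (id::'a \<Rightarrow> 'a))" by (rule adj_opscale[OF bop_id])
    also have "\<dots> = opscale s id" by (simp only: cs adj_id)
    finally show ?thesis unfolding a_def .
  qed
  have Adf: "Ad (a i) (Ps i x) h = hscale c (adj (S i) (x (S i h)))" if i: "i < n" and x: "bop x" for i x h
  proof -
    have "Ad (a i) (Ps i x) h = hscale s (adj (S i) (x (S i (hscale s h))))"
      unfolding Ad_def aa by (simp add: a_def Ps_def opscale_def)
    also have "\<dots> = hscale (s * s) (adj (S i) (x (S i h)))"
      by (simp add: bop_scale[OF SB[OF i]] bop_scale[OF x] bop_scale[OF SaB[OF i]] hscale_assoc)
    finally show ?thesis unfolding ss .
  qed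
  have adm: "admissible_decomp (cstar_gen (S ` {..<n})) (\<lambda>x h. hscale (1 / of_nat n) (\<Sum>i<n. adj (S i) (x (S i h)))) n a Ps"
    unfolding admissible_decomp_def
  proof (intro conjI allI ballI impI)
    fix i assume i: "i < n"
    show "CP (cstar_gen (S ` {..<n})) (Ps i)"
      unfolding CP_def linear_on_def
    proof (intro conjI allI ballI impI)
      fix x y assume "x \<in> cstar_gen (S ` {..<n})" "y \<in> cstar_gen (S ` {..<n})"
      show "Ps i (opadd x y) = opadd (Ps i x) (Ps i y)"
        unfolding Ps_def opadd_def by (rule ext) (simp add: bop_add[OF SaB[OF i]])
    next
      fix c x assume "x \<in> cstar_gen (S ` {..<n})"
      show "Ps i (opscale c x) = opscale c (Ps i x)"
        unfolding Ps_def opscale_def by (rule ext) (simp add: bop_scale[OF SaB[OF i]])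
    next
      show "Ps i ` cstar_gen (S ` {..<n}) \<subseteq> cstar_gen (S ` {..<n})"
        unfolding Ps_def using cstar_comp[OF cstar_comp[OF Sa_On[OF i]] S_On[OF i]] by blast
    next
      fix k X assume "(\<forall>i j. X i j \<in> cstar_gen (S ` {..<n})) \<and> matpos k X"
      hence "matpos k X" by blast
      from matpos_Ad[OF SaB[OF i] this]
      show "matpos k (\<lambda>p q. Ps i (X p q))" unfolding Ps_def adj_adj[OF SB[OF i]] .
    qed
    show "a i \<in> cstar_gen (S ` {..<n})" unfolding a_def by (rule cstar_opscale[OF id_On])
    show "a i \<noteq> (\<lambda>_. 0)"
    proof
      assume z: "a i = (\<lambda>_. 0)"
      obtain x0 :: 'a where x0: "x0 \<noteq> 0" using nz by blast
      have "hscale s x0 = 0" using z unfolding a_def opscale_def by (metis id_apply)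
      thus False using hscale_eq_0 s0 x0 by blast
    qed
  next
    fix h :: 'a
    have "(\<Sum>i<n. a i (adj (a i) h)) = (\<Sum>i<n. hscale c h)"
      unfolding aa by (simp add: a_def opscale_def hscale_assoc ss)
    also have "\<dots> = hscale c (hscale (of_nat n) h)" by (simp add: hscale_sum_right[symmetric] sum_const_vec)
    also have "\<dots> = h" unfolding c_def using n2 by (simp add: hscale_assoc hscale_one)
    finally show "(\<Sum>i<n. a i (adj (a i) h)) = h" .
  next
    fix x h assume x: "x \<in> cstar_gen (S ` {..<n})"
    have "(\<Sum>i<n. Ad (a i) (Ps i x) h) = (\<Sum>i<n. hscale c (adj (S i) (x (S i h))))"
      by (intro sum.cong refl) (simp add: Adf OnB[OF x])
    also have "\<dots> = hscale c (\<Sum>i<n. adj (S i) (x (S i h)))" by (simp add: hscale_sum_right)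
    finally show "(\<lambda>x h. hscale (1 / of_nat n) (\<Sum>i<n. adj (S i) (x (S i h)))) x h = (\<Sum>i<n. Ad (a i) (Ps i x) h)"
      unfolding c_def by simp
  qed
  obtain z where z: "\<forall>i<n. (\<forall>x\<in>cstar_gen (S ` {..<n}). Ad (a i) (Ps i x) = z i \<circ> (\<lambda>x h. hscale (1 / of_nat n) (\<Sum>i<n. adj (S i) (x (S i h)))) x)"
    using oe adm unfolding operational_extreme_def by blast
  have z0: "\<And>x. x \<in> cstar_gen (S ` {..<n}) \<Longrightarrow> Ad (a 0) (Ps 0 x) = z 0 \<circ> (\<lambda>h. hscale (1 / of_nat n) (\<Sum>i<n. adj (S i) (x (S i h))))"
    using z n0 by simp
  have zh: "z 0 h = hscale c h" for h
  proof -
    have "Ad (a 0) (Ps 0 id) h = z 0 h" using z0[OF id_On] Psi_id by (metis comp_apply id_apply)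
    moreover have "Ad (a 0) (Ps 0 id) h = hscale c h" using Adf[OF n0 bop_id] SI[OF n0] by simp
    ultimately show ?thesis by simp
  qed
  obtain x0 :: 'a where x0: "x0 \<noteq> 0" using nz by blast
  have "Ad (a 0) (Ps 0 (S 0 \<circ> adj (S 0))) x0 = z 0 (hscale (1 / of_nat n) x0)"
    using z0[OF P_On[OF n0]] Psi_P0 by (metis comp_apply)
  moreover have "Ad (a 0) (Ps 0 (S 0 \<circ> adj (S 0))) x0 = hscale c x0" using Adf[OF n0 P_bop[OF n0]] SI[OF n0] by simp
  ultimately have "hscale c x0 = hscale (c * c) x0" using zh unfolding c_def by (simp add: hscale_assoc)
  hence "c = c * c" using x0 by (rule hscale_same)
  thus False using c_facts(2) unfolding c_def by simp
qed

end


theorem mainTheorem6: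
  fixes S :: "nat \<Rightarrow> ('a::chilbert \<Rightarrow> 'a)" and n :: nat
  assumes "n \<ge> 2"
    and "infinite_dim TYPE('a)"
    and "\<forall>i<n. isometry (S i)"
    and "\<forall>h. (\<Sum>i<n. S i (adj (S i) h)) = h"
  defines "On \<equiv> cstar_gen (S ` {..<n})"
    and "Phi \<equiv> (\<lambda>x h. \<Sum>i<n. S i (x (adj (S i) h)))"
    and "Psi \<equiv> (\<lambda>x h. hscale (1 / of_nat n) (\<Sum>i<n. adj (S i) (x (S i h))))"
  shows "commutant (Phi ` On) \<noteq> scalar_ops
     \<and> operational_extreme On Phi \<and> \<not> numerical_operational_extreme On Phi
     \<and> \<not> operational_extreme On Psi \<and> \<not> jordan_hom_on On Psi"
proof -
  have nz: "\<exists>x::'a. x \<noteq> 0"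
  proof -
    have "\<exists>x::'a. \<forall>c. x \<noteq> (\<Sum>f\<in>{}. hscale (c f) f)"
      using assms(2) unfolding infinite_dim_def by blast
    thus ?thesis by simp
  qed
  interpret cuntz S n
    using assms(1,3,4) nz by unfold_locales auto
  show ?thesis
    unfolding On_def Phi_def Psi_def
    using part_i opext_Phi not_numerical not_opext_Psi not_jordan by blast
qed

end
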